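(* Let $n\ge 2$ and $F_n=\langle x_1,\dots,x_n\rangle$. Let $S=\{x_jx_ix_j^{-1},\ x_j^{-1}x_ix_j : i,j\in\{1,\dots,n\},\ i\ne j\}$ (a set of $2n(n-1)$ elements), let $G=\langle S\rangle$, and for each $s\in S$ let $G_s=\langle S\setminus\{s\}\rangle$. Then the coset incidence system $\Gamma=\Gamma(G;(G_s)_{s\in S})$ is a residually connected and flag-transitive geometry. Moreover, the group $K=\langle\phi_1,\phi_\rho,\phi_\tau\rangle\le\mathrm{Aut}(F_n)$, where $\phi_1(x_1,\dots,x_n)=(x_1^{-1},x_2,\dots,x_n)$, $\phi_\rho(x_1,\dots,x_n)=(x_2,\dots,x_n,x_1)$ and $\phi_\tau(x_1,\dots,x_n)=(x_2,x_1,x_3,\dots,x_n)$ (so $K\cong C_2^n\rtimes\mathrm{Sym}(n)$), acts on $\Gamma$ as a group of correlations: each $\phi\in K$ satisfies $\phi(G)=G$, permutes the subgroups $G_s$, and induces the correlation $G_sg\mapsto \phi(G_s)\phi(g)$ of $\Gamma$.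
   Context: An incidence system is a quadruple $\Gamma=(X,*,t,I)$ with $X$ a set, $I$ a finite type set, $t:X\to I$ surjective, and $*$ a symmetric relation with no two elements of the same type incident. A flag is a set of pairwise incident elements; a chamber is a flag containing an element of each type; $\Gamma$ is a geometry if every flag is contained in a chamber. The residue of a flag $F$ is the incidence system (induced types and incidence) of elements not in $F$ incident with all elements of $F$. A geometry is residually connected if the incidence graph of every residue of rank at least two is connected (the residue of the empty flag is $\Gamma$ itself). A correlation of $\Gamma$ is a permutation $\alpha$ of $X$ with $t(x)=t(y)\iff t(\alpha x)=t(\alpha y)$ and $x*y\iff \alpha x*\alpha y$. Coset incidence system: for a group $G$ with subgroups $(G_i)_{i\in I}$, $\Gamma(G;(G_i)_{i\in I})$ has elements the right cosets $G_ig$, type $t(G_ig)=i$, and $G_ig_1*G_jg_2$ iff $G_ig_1\cap G_jg_2\ne\emptyset$; $G$ acts by right multiplication. It is flag-transitive if $G$ is transitive on the flags of type $J$ for every $J\subseteq I$. *)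

theory Defs
  imports "HOL-Algebra.Algebra"
begin

section \<open>Free group F_n on generators x_0, ..., x_(n-1) (paper: x_1, ..., x_n)\<close>

text \<open>A letter (i, b) stands for x_i if b = False and for x_i^(-1) if b = True.
  Elements of F_n are freely reduced words over letters with index < n.\<close>

type_synonym letter = "nat \<times> bool"

definition cancels :: "letter \<Rightarrow> letter \<Rightarrow> bool" where
  "cancels a b \<longleftrightarrow> fst a = fst b \<and> snd a \<noteq> snd b"

fun reduced :: "letter list \<Rightarrow> bool" where
  "reduced [] = True"
| "reduced [a] = True"
| "reduced (a # b # w) = (\<not> cancels a b \<and> reduced (b # w))"

fun red_cons :: "letter \<Rightarrow> letter list \<Rightarrow> letter list" where
  "red_cons a [] = [a]"
| "red_cons a (b # w) = (if cancels a b then w else a # b # w)"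

definition reduce :: "letter list \<Rightarrow> letter list" where
  "reduce w = foldr red_cons w []"

definition FreeGrp :: "nat \<Rightarrow> letter list monoid" where
  "FreeGrp n = \<lparr> carrier = {w. reduced w \<and> (\<forall>a \<in> set w. fst a < n)},
                 monoid.mult = (\<lambda>u v. reduce (u @ v)),
                 monoid.one = [] \<rparr>"

definition gen :: "nat \<Rightarrow> letter list" where
  "gen i = [(i, False)]"

text \<open>Extension of an assignment of group elements to the generators to a map on words
  (the substitution endomorphism), restricted to the carrier (extensional, as in auto).\<close>
definition fsubst :: "nat \<Rightarrow> (nat \<Rightarrow> letter list) \<Rightarrow> letter list \<Rightarrow> letter list" where
  "fsubst n f = (\<lambda>w \<in> carrier (FreeGrp n).
      foldr (\<lambda>a acc. (if snd a then inv\<^bsub>FreeGrp n\<^esub> (f (fst a)) else f (fst a)) \<otimes>\<^bsub>FreeGrp n\<^esub> acc)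
            w \<one>\<^bsub>FreeGrp n\<^esub>)"

definition phi1 :: "nat \<Rightarrow> letter list \<Rightarrow> letter list" where
  "phi1 n = fsubst n (\<lambda>i. if i = 0 then inv\<^bsub>FreeGrp n\<^esub> (gen 0) else gen i)"

definition phi_rho :: "nat \<Rightarrow> letter list \<Rightarrow> letter list" where
  "phi_rho n = fsubst n (\<lambda>i. gen ((i + 1) mod n))"

definition phi_tau :: "nat \<Rightarrow> letter list \<Rightarrow> letter list" where
  "phi_tau n = fsubst n (\<lambda>i. if i = 0 then gen 1 else if i = 1 then gen 0 else gen i)"

definition Kgrp :: "nat \<Rightarrow> (letter list \<Rightarrow> letter list) set" where
  "Kgrp n = generate (AutoGroup (FreeGrp n)) {phi1 n, phi_rho n, phi_tau n}"

definition Sset :: "nat \<Rightarrow> letter list set" where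
  "Sset n = {gen j \<otimes>\<^bsub>FreeGrp n\<^esub> gen i \<otimes>\<^bsub>FreeGrp n\<^esub> inv\<^bsub>FreeGrp n\<^esub> (gen j) | i j. i < n \<and> j < n \<and> i \<noteq> j}
          \<union> {inv\<^bsub>FreeGrp n\<^esub> (gen j) \<otimes>\<^bsub>FreeGrp n\<^esub> gen i \<otimes>\<^bsub>FreeGrp n\<^esub> gen j | i j. i < n \<and> j < n \<and> i \<noteq> j}"

definition Ggrp :: "nat \<Rightarrow> letter list set" where
  "Ggrp n = generate (FreeGrp n) (Sset n)"

definition Gsub :: "nat \<Rightarrow> letter list \<Rightarrow> letter list set" where
  "Gsub n s = generate (FreeGrp n) (Sset n - {s})"

definition is_incidence_system :: "'x set \<Rightarrow> ('x \<Rightarrow> 'x \<Rightarrow> bool) \<Rightarrow> ('x \<Rightarrow> 't) \<Rightarrow> 't set \<Rightarrow> bool" where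
  "is_incidence_system Xs inc typ I \<longleftrightarrow> finite I \<and> typ ` Xs = I \<and>
     (\<forall>x\<in>Xs. \<forall>y\<in>Xs. inc x y \<longleftrightarrow> inc y x) \<and>
     (\<forall>x\<in>Xs. \<forall>y\<in>Xs. x \<noteq> y \<and> typ x = typ y \<longrightarrow> \<not> inc x y)"

definition is_flag :: "'x set \<Rightarrow> ('x \<Rightarrow> 'x \<Rightarrow> bool) \<Rightarrow> 'x set \<Rightarrow> bool" where
  "is_flag Xs inc F \<longleftrightarrow> F \<subseteq> Xs \<and> (\<forall>x\<in>F. \<forall>y\<in>F. x \<noteq> y \<longrightarrow> inc x y)"

definition is_chamber :: "'x set \<Rightarrow> ('x \<Rightarrow> 'x \<Rightarrow> bool) \<Rightarrow> ('x \<Rightarrow> 't) \<Rightarrow> 't set \<Rightarrow> 'x set \<Rightarrow> bool" where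
  "is_chamber Xs inc typ I C \<longleftrightarrow> is_flag Xs inc C \<and> typ ` C = I"

definition is_geometry :: "'x set \<Rightarrow> ('x \<Rightarrow> 'x \<Rightarrow> bool) \<Rightarrow> ('x \<Rightarrow> 't) \<Rightarrow> 't set \<Rightarrow> bool" where
  "is_geometry Xs inc typ I \<longleftrightarrow>
     (\<forall>F. is_flag Xs inc F \<longrightarrow> (\<exists>C. is_chamber Xs inc typ I C \<and> F \<subseteq> C))"

text \<open>Elements of the residue of the flag F (its types are I - typ ` F, incidence induced).\<close>
definition residue :: "'x set \<Rightarrow> ('x \<Rightarrow> 'x \<Rightarrow> bool) \<Rightarrow> 'x set \<Rightarrow> 'x set" where
  "residue Xs inc F = {x \<in> Xs - F. \<forall>y\<in>F. inc x y}"

definition graph_connected :: "'x set \<Rightarrow> ('x \<Rightarrow> 'x \<Rightarrow> bool) \<Rightarrow> bool" where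
  "graph_connected V E \<longleftrightarrow> (\<forall>x\<in>V. \<forall>y\<in>V. (\<lambda>a b. a \<in> V \<and> b \<in> V \<and> E a b)\<^sup>*\<^sup>* x y)"

definition residually_connected :: "'x set \<Rightarrow> ('x \<Rightarrow> 'x \<Rightarrow> bool) \<Rightarrow> ('x \<Rightarrow> 't) \<Rightarrow> 't set \<Rightarrow> bool" where
  "residually_connected Xs inc typ I \<longleftrightarrow>
     (\<forall>F. is_flag Xs inc F \<and> card (I - typ ` F) \<ge> 2 \<longrightarrow> graph_connected (residue Xs inc F) inc)"

definition is_correlation :: "'x set \<Rightarrow> ('x \<Rightarrow> 'x \<Rightarrow> bool) \<Rightarrow> ('x \<Rightarrow> 't) \<Rightarrow> ('x \<Rightarrow> 'x) \<Rightarrow> bool" where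
  "is_correlation Xs inc typ \<alpha> \<longleftrightarrow> bij_betw \<alpha> Xs Xs \<and>
     (\<forall>x\<in>Xs. \<forall>y\<in>Xs. (typ x = typ y \<longleftrightarrow> typ (\<alpha> x) = typ (\<alpha> y)) \<and> (inc x y \<longleftrightarrow> inc (\<alpha> x) (\<alpha> y)))"

text \<open>Distinct elements
  are incident iff they have different types and the cosets intersect (elements of the
  same type are distinct cosets of the same subgroup, hence disjoint).\<close>

definition coset_elems :: "('g, 'm) monoid_scheme \<Rightarrow> 'g set \<Rightarrow> 'i set \<Rightarrow> ('i \<Rightarrow> 'g set) \<Rightarrow> ('i \<times> 'g set) set" where
  "coset_elems M G I H = {(i, H i #>\<^bsub>M\<^esub> g) | i g. i \<in> I \<and> g \<in> G}"

definition coset_inc :: "('i \<times> 'g set) \<Rightarrow> ('i \<times> 'g set) \<Rightarrow> bool" where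
  "coset_inc x y \<longleftrightarrow> fst x \<noteq> fst y \<and> snd x \<inter> snd y \<noteq> {}"

definition coset_act :: "('g, 'm) monoid_scheme \<Rightarrow> 'g \<Rightarrow> ('i \<times> 'g set) \<Rightarrow> ('i \<times> 'g set)" where
  "coset_act M h x = (fst x, snd x #>\<^bsub>M\<^esub> h)"

definition flag_transitive :: "('g, 'm) monoid_scheme \<Rightarrow> 'g set \<Rightarrow> 'i set \<Rightarrow> ('i \<Rightarrow> 'g set) \<Rightarrow> bool" where
  "flag_transitive M G I H \<longleftrightarrow>
     (\<forall>J \<subseteq> I. \<forall>F1 F2. is_flag (coset_elems M G I H) coset_inc F1 \<and> fst ` F1 = J
        \<and> is_flag (coset_elems M G I H) coset_inc F2 \<and> fst ` F2 = J
        \<longrightarrow> (\<exists>h \<in> G. coset_act M h ` F1 = F2))"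

end

theory Submission
  imports Defs
begin


definition fgc :: "'a \<times> bool \<Rightarrow> 'a \<times> bool \<Rightarrow> bool" where
  "fgc a b \<longleftrightarrow> fst a = fst b \<and> snd a \<noteq> snd b"

fun fgr :: "('a \<times> bool) list \<Rightarrow> bool" where
  "fgr [] = True"
| "fgr [a] = True"
| "fgr (a # b # w) = (\<not> fgc a b \<and> fgr (b # w))"

fun fgrc :: "'a \<times> bool \<Rightarrow> ('a \<times> bool) list \<Rightarrow> ('a \<times> bool) list" where
  "fgrc a [] = [a]"
| "fgrc a (b # w) = (if fgc a b then w else a # b # w)"

definition fgred :: "('a \<times> bool) list \<Rightarrow> ('a \<times> bool) list" where
  "fgred w = foldr fgrc w []"

definition FG :: "'a set \<Rightarrow> ('a \<times> bool) list monoid" where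
  "FG A = \<lparr> carrier = {w. fgr w \<and> (\<forall>a \<in> set w. fst a \<in> A)},
                 monoid.mult = (\<lambda>u v. fgred (u @ v)),
                 monoid.one = [] \<rparr>"

definition flp :: "'a \<times> bool \<Rightarrow> 'a \<times> bool" where "flp a = (fst a, \<not> snd a)"

definition finv :: "('a \<times> bool) list \<Rightarrow> ('a \<times> bool) list" where "finv w = rev (map flp w)"

lemma FreeGrp_FG: "FreeGrp n = FG {..<n}"
proof -
  have c: "cancels = fgc" by (auto simp: fun_eq_iff cancels_def fgc_def)
  have r: "reduced w = fgr w" for w by (induction w rule: reduced.induct) (auto simp: c)
  have rc: "red_cons a w = fgrc a w" for a w by (cases w) (auto simp: c)
  have rc': "red_cons = fgrc" using rc by (auto simp: fun_eq_iff)
  have rd: "reduce = fgred" unfolding reduce_def fgred_def rc' ..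
  show ?thesis unfolding FreeGrp_def FG_def by (simp add: r rd)
qed

lemma fgc_flp[simp]: "fgc a (flp a)" "fgc (flp a) a" by (auto simp: fgc_def flp_def)
lemma fgc_eq: "fgc a b \<Longrightarrow> b = flp a" by (cases a; cases b) (auto simp: fgc_def flp_def)
lemma flp_flp[simp]: "flp (flp a) = a" by (simp add: flp_def)
lemma fst_flp[simp]: "fst (flp a) = fst a" by (simp add: flp_def)
lemma fgc_sym: "fgc a b = fgc b a" by (auto simp: fgc_def)

lemma fgr_Cons: "fgr (a # w) \<longleftrightarrow> fgr w \<and> (w \<noteq> [] \<longrightarrow> \<not> fgc a (hd w))"
  by (cases w) auto

lemma fgr_append: "fgr (u @ v) \<longleftrightarrow> fgr u \<and> fgr v \<and> (u \<noteq> [] \<longrightarrow> v \<noteq> [] \<longrightarrow> \<not> fgc (last u) (hd v))"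
  by (induction u rule: fgr.induct) (auto simp: fgr_Cons)

lemma fgrc_reduced: "fgr w \<Longrightarrow> fgr (fgrc a w)"
  by (cases w) (auto simp: fgr_Cons)

lemma fgrc_id: "fgr (a # w) \<Longrightarrow> fgrc a w = a # w"
  by (cases w) auto

lemma fgred_reduced: "fgr (fgred w)"
  unfolding fgred_def by (induction w) (auto intro: fgrc_reduced)

lemma fgred_id: "fgr w \<Longrightarrow> fgred w = w"
  unfolding fgred_def by (induction w) (auto simp: fgr_Cons fgrc_id)

lemma set_fgrc: "set (fgrc a w) \<subseteq> insert a (set w)"
  by (cases w) auto

lemma set_fgred: "set (fgred w) \<subseteq> set w"
  unfolding fgred_def by (induction w) (use set_fgrc in fastforce)+

lemma fgrc_cancel: "fgc a b \<Longrightarrow> fgr y \<Longrightarrow> fgrc a (fgrc b y) = y"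
proof (cases y)
  case (Cons c y')
  assume ab: "fgc a b" and y: "fgr y"
  show ?thesis
  proof (cases "fgc b c")
    case True
    hence "c = a" using ab by (cases a; cases b; cases c) (auto simp: fgc_def)
    thus ?thesis using Cons True y by (cases y') (auto)
  qed (use Cons ab in auto)
qed auto

lemma foldr_fgrc: "fgr x \<Longrightarrow> fgr v \<Longrightarrow> fgrc a (foldr fgrc v x) = foldr fgrc (fgrc a v) x"
proof (cases v)
  case (Cons b v')
  assume x: "fgr x" and v: "fgr v"
  have "fgr (foldr fgrc v' x)" using x by (induction v') (auto intro: fgrc_reduced)
  thus ?thesis using Cons x v by (auto simp: fgrc_cancel)
qed auto

lemma foldr_reduce: "fgr x \<Longrightarrow> foldr fgrc u x = foldr fgrc (fgred u) x"
proof (induction u)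
  case (Cons a u)
  have "foldr fgrc (a # u) x = fgrc a (foldr fgrc (fgred u) x)" using Cons by simp
  also have "\<dots> = foldr fgrc (fgrc a (fgred u)) x" using foldr_fgrc Cons.prems fgred_reduced by blast
  finally show ?case by (simp add: fgred_def)
qed (simp add: fgred_def)

lemma fgred_append: "fgred (u @ v) = foldr fgrc u (fgred v)"
  by (simp add: fgred_def)

lemma fgred_append_red1: "fgred (fgred u @ v) = fgred (u @ v)"
  by (simp add: fgred_append foldr_reduce[OF fgred_reduced, symmetric])

lemma fgred_append_red2: "fgred (u @ fgred v) = fgred (u @ v)"
  by (simp add: fgred_append fgred_id[OF fgred_reduced])

lemma finv_cancel: "fgr (finv w @ x) \<Longrightarrow> foldr fgrc w (finv w @ x) = x"
proof (induction w arbitrary: x)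
  case (Cons a w)
  have "finv (a # w) @ x = finv w @ (flp a # x)" by (simp add: finv_def)
  hence "foldr fgrc w (finv (a # w) @ x) = flp a # x" using Cons by simp
  moreover have "fgr x" using Cons.prems by (simp add: fgr_append)
  ultimately show ?case by (cases x) (auto)
qed (simp add: finv_def)

lemma finv_reduced: "fgr w \<Longrightarrow> fgr (finv w)"
  unfolding finv_def
  by (induction w rule: fgr.induct) (auto simp: fgr_append fgc_def flp_def)

lemma finv_finv[simp]: "finv (finv w) = w" by (simp add: finv_def rev_map comp_def)

lemma fgred_inv: "fgr w \<Longrightarrow> fgred (w @ finv w) = []"
  using finv_cancel[of w "[]"] by (simp add: fgred_append fgred_id finv_reduced)

lemma fgred_inv2: "fgr w \<Longrightarrow> fgred (finv w @ w) = []"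
  using fgred_inv[of "finv w"] by (simp add: finv_reduced)

lemma set_finv: "set (finv w) = flp ` set w" by (simp add: finv_def)

lemma group_FG: "group (FG A)"
proof (rule groupI)
  fix x y z
  assume x: "x \<in> carrier (FG A)" and y: "y \<in> carrier (FG A)" and z: "z \<in> carrier (FG A)"
  show "x \<otimes>\<^bsub>FG A\<^esub> y \<in> carrier (FG A)" using x y set_fgred[of "x @ y"]
    by (auto simp: FG_def fgred_reduced)
  show "x \<otimes>\<^bsub>FG A\<^esub> y \<otimes>\<^bsub>FG A\<^esub> z = x \<otimes>\<^bsub>FG A\<^esub> (y \<otimes>\<^bsub>FG A\<^esub> z)"
    by (simp add: FG_def fgred_append_red1 fgred_append_red2)
next
  show "\<one>\<^bsub>FG A\<^esub> \<in> carrier (FG A)" by (simp add: FG_def)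
next
  fix x assume x: "x \<in> carrier (FG A)"
  thus "\<one>\<^bsub>FG A\<^esub> \<otimes>\<^bsub>FG A\<^esub> x = x" by (simp add: FG_def fgred_id)
  show "\<exists>y\<in>carrier (FG A). y \<otimes>\<^bsub>FG A\<^esub> x = \<one>\<^bsub>FG A\<^esub>"
    using x by (intro bexI[of _ "finv x"]) (auto simp: FG_def fgred_inv2 finv_reduced set_finv)
qed

lemma carrier_FG: "carrier (FG A) = {w. fgr w \<and> (\<forall>a \<in> set w. fst a \<in> A)}"
  by (simp add: FG_def)
lemma mult_FG: "x \<otimes>\<^bsub>FG A\<^esub> y = fgred (x @ y)" by (simp add: FG_def)
lemma one_FG: "\<one>\<^bsub>FG A\<^esub> = []" by (simp add: FG_def)

lemma inv_FG: "x \<in> carrier (FG A) \<Longrightarrow> inv\<^bsub>FG A\<^esub> x = finv x"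
  by (rule group.inv_equality[OF group_FG]) (auto simp: FG_def fgred_inv2 finv_reduced set_finv)



definition fgval :: "('b,'m) monoid_scheme \<Rightarrow> ('a \<Rightarrow> 'b) \<Rightarrow> 'a \<times> bool \<Rightarrow> 'b" where
  "fgval M f a = (if snd a then inv\<^bsub>M\<^esub> (f (fst a)) else f (fst a))"

definition fgext :: "('b,'m) monoid_scheme \<Rightarrow> ('a \<Rightarrow> 'b) \<Rightarrow> ('a \<times> bool) list \<Rightarrow> 'b" where
  "fgext M f w = foldr (\<lambda>a acc. fgval M f a \<otimes>\<^bsub>M\<^esub> acc) w \<one>\<^bsub>M\<^esub>"

lemma fgext_Nil[simp]: "fgext M f [] = \<one>\<^bsub>M\<^esub>" by (simp add: fgext_def)
lemma fgext_Cons[simp]: "fgext M f (a # w) = fgval M f a \<otimes>\<^bsub>M\<^esub> fgext M f w" by (simp add: fgext_def)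

context
  fixes M :: "('b,'m) monoid_scheme" and f :: "'a \<Rightarrow> 'b" and A :: "'a set"
  assumes grp: "group M" and fA: "\<And>a. a \<in> A \<Longrightarrow> f a \<in> carrier M"
begin

interpretation M: group M by (rule grp)

lemma fgval_closed: "fst a \<in> A \<Longrightarrow> fgval M f a \<in> carrier M"
  by (auto simp: fgval_def fA)

lemma fgext_closed: "\<forall>a\<in>set w. fst a \<in> A \<Longrightarrow> fgext M f w \<in> carrier M"
  by (induction w) (auto simp: fgval_closed)

lemma fgext_append: "\<forall>a\<in>set (u @ v). fst a \<in> A \<Longrightarrow> fgext M f (u @ v) = fgext M f u \<otimes>\<^bsub>M\<^esub> fgext M f v"
  by (induction u) (auto simp: fgval_closed fgext_closed M.m_assoc)

lemma fgval_flp: "fst a \<in> A \<Longrightarrow> fgval M f a \<otimes>\<^bsub>M\<^esub> fgval M f (flp a) = \<one>\<^bsub>M\<^esub>"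
  by (auto simp: fgval_def flp_def fA)

lemma fgext_fgrc: "\<forall>b\<in>set (a # w). fst b \<in> A \<Longrightarrow> fgext M f (fgrc a w) = fgval M f a \<otimes>\<^bsub>M\<^esub> fgext M f w"
proof (cases w)
  case (Cons b w')
  assume h: "\<forall>b\<in>set (a # w). fst b \<in> A"
  show ?thesis
  proof (cases "fgc a b")
    case True
    hence b: "b = flp a" by (rule fgc_eq)
    have "fgval M f a \<otimes>\<^bsub>M\<^esub> (fgval M f b \<otimes>\<^bsub>M\<^esub> fgext M f w') = fgext M f w'"
      using h Cons b by (simp add: M.m_assoc[symmetric] fgval_closed fgext_closed fgval_flp)
    thus ?thesis using Cons True by simp
  qed (use Cons in simp)
qed simp

lemma fgext_fgred: "\<forall>b\<in>set w. fst b \<in> A \<Longrightarrow> fgext M f (fgred w) = fgext M f w"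
proof (induction w)
  case (Cons a w)
  have "fgred (a # w) = fgrc a (fgred w)" by (simp add: fgred_def)
  moreover have "\<forall>b\<in>set (a # fgred w). fst b \<in> A" using Cons.prems set_fgred by fastforce
  ultimately show ?case using Cons by (simp add: fgext_fgrc)
qed (simp add: fgred_def)

lemma fgext_hom: "fgext M f \<in> hom (FG A) M"
proof (rule homI)
  fix x assume "x \<in> carrier (FG A)" thus "fgext M f x \<in> carrier M"
    by (auto simp: carrier_FG fgext_closed)
next
  fix x y assume "x \<in> carrier (FG A)" "y \<in> carrier (FG A)"
  hence xy: "\<forall>b\<in>set (x@y). fst b \<in> A" by (auto simp: carrier_FG)
  show "fgext M f (x \<otimes>\<^bsub>FG A\<^esub> y) = fgext M f x \<otimes>\<^bsub>M\<^esub> fgext M f y"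
    by (simp add: mult_FG fgext_fgred[OF xy] fgext_append[OF xy])
qed

end

definition gensFG :: "'a set \<Rightarrow> ('a \<times> bool) list set" where
  "gensFG B = {[(b, False)] | b. b \<in> B}"

lemma inv_single: "a \<in> A \<Longrightarrow> inv\<^bsub>FG A\<^esub> [(a, False)] = [(a, True)]"
  by (simp add: inv_FG carrier_FG finv_def flp_def)

lemma single_mult: "fgr (l # w) \<Longrightarrow> [l] \<otimes>\<^bsub>FG A\<^esub> w = l # w"
  by (simp add: mult_FG fgred_id)

lemma generate_FG: "B \<subseteq> A \<Longrightarrow> generate (FG A) (gensFG B) = {w \<in> carrier (FG A). \<forall>l\<in>set w. fst l \<in> B}"
proof
  assume B: "B \<subseteq> A"
  interpret G: group "FG A" by (rule group_FG)
  show "generate (FG A) (gensFG B) \<subseteq> {w \<in> carrier (FG A). \<forall>l\<in>set w. fst l \<in> B}"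
  proof
    fix w assume "w \<in> generate (FG A) (gensFG B)"
    thus "w \<in> {w \<in> carrier (FG A). \<forall>l\<in>set w. fst l \<in> B}"
    proof induction
      case one then show ?case by (simp add: one_FG carrier_FG)
    next
      case (incl h) then show ?case using B by (auto simp: gensFG_def carrier_FG)
    next
      case (inv h) then show ?case using B by (auto simp: gensFG_def carrier_FG inv_single)
    next
      case (eng h1 h2) then show ?case using set_fgred[of "h1 @ h2"]
        by (auto simp: mult_FG carrier_FG fgred_reduced)
    qed
  qed
  show "{w \<in> carrier (FG A). \<forall>l\<in>set w. fst l \<in> B} \<subseteq> generate (FG A) (gensFG B)"
  proof
    fix w assume "w \<in> {w \<in> carrier (FG A). \<forall>l\<in>set w. fst l \<in> B}"
    hence "fgr w" "\<forall>l\<in>set w. fst l \<in> B" by (auto simp: carrier_FG)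
    thus "w \<in> generate (FG A) (gensFG B)"
    proof (induction w)
      case Nil then show ?case using generate.one[of "FG A"] by (simp add: one_FG)
    next
      case (Cons l w)
      have "fgr w" using Cons.prems by (simp add: fgr_Cons)
      hence wg: "w \<in> generate (FG A) (gensFG B)" using Cons by simp
      obtain a e where l: "l = (a, e)" by force
      have aB: "a \<in> B" using Cons.prems l by simp
      have "[l] \<in> generate (FG A) (gensFG B)"
      proof (cases e)
        case True
        have "[l] = inv\<^bsub>FG A\<^esub> [(a, False)]" using aB B True l by (simp add: inv_single subset_iff)
        thus ?thesis using generate.inv[of "[(a,False)]" "gensFG B" "FG A"] aB by (simp add: gensFG_def)
      next
        case False
        thus ?thesis using generate.incl[of "[(a,False)]" "gensFG B" "FG A"] aB l by (simp add: gensFG_def)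
      qed
      from generate.eng[OF this wg] show ?case using Cons.prems by (simp add: single_mult)
    qed
  qed
qed

lemma hom_FG_unique:
  assumes grp: "group M" and h1: "h1 \<in> hom (FG A) M" and h2: "h2 \<in> hom (FG A) M"
    and eq: "\<And>a. a \<in> A \<Longrightarrow> h1 [(a, False)] = h2 [(a, False)]"
    and w: "w \<in> carrier (FG A)"
  shows "h1 w = h2 w"
proof -
  interpret H1: group_hom "FG A" M h1 by (simp add: group_hom_def group_hom_axioms_def group_FG grp h1)
  interpret H2: group_hom "FG A" M h2 by (simp add: group_hom_def group_hom_axioms_def group_FG grp h2)
  have "A \<subseteq> A" by simp
  have "w \<in> generate (FG A) (gensFG A)" using generate_FG[of A A] w by (auto simp: carrier_FG)
  thus ?thesis
  proof induction
    case one then show ?case by simp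
  next
    case (incl h) then show ?case using eq by (auto simp: gensFG_def)
  next
    case (inv h)
    hence "h \<in> carrier (FG A)" "h1 h = h2 h" using eq by (auto simp: gensFG_def carrier_FG)
    thus ?case by simp
  next
    case (eng x y)
    have "generate (FG A) (gensFG A) \<subseteq> carrier (FG A)"
      by (rule group.generate_incl[OF group_FG]) (auto simp: gensFG_def carrier_FG)
    hence "x \<in> carrier (FG A)" "y \<in> carrier (FG A)" using eng.hyps by auto
    thus ?case using eng.IH by simp
  qed
qed



definition Hs :: "'a set \<Rightarrow> 'a set \<Rightarrow> ('a \<times> bool) list set" where
  "Hs A B = {w \<in> carrier (FG A). \<forall>l\<in>set w. fst l \<in> B}"

lemma Hs_subset: "Hs A B \<subseteq> carrier (FG A)" by (auto simp: Hs_def)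

lemma subgroup_Hs: "subgroup (Hs A B) (FG A)"
proof (rule subgroup.intro)
  show "Hs A B \<subseteq> carrier (FG A)" by (rule Hs_subset)
next
  fix x y assume "x \<in> Hs A B" "y \<in> Hs A B"
  thus "x \<otimes>\<^bsub>FG A\<^esub> y \<in> Hs A B" using set_fgred[of "x @ y"]
    by (auto simp: Hs_def mult_FG carrier_FG fgred_reduced)
next
  show "\<one>\<^bsub>FG A\<^esub> \<in> Hs A B" by (simp add: Hs_def one_FG carrier_FG)
next
  fix x assume "x \<in> Hs A B"
  thus "inv\<^bsub>FG A\<^esub> x \<in> Hs A B"
    by (auto simp: Hs_def inv_FG carrier_FG finv_reduced set_finv)
qed

lemma generate_Hs: "B \<subseteq> A \<Longrightarrow> generate (FG A) (gensFG B) = Hs A B"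
  by (simp add: generate_FG Hs_def)

lemma Hs_Inter: "J \<noteq> {} \<Longrightarrow> (\<Inter>s\<in>J. Hs A (A - {s})) = Hs A (A - J)"
  by (auto simp: Hs_def carrier_FG)

abbreviation Ha :: "'a set \<Rightarrow> 'a \<Rightarrow> ('a \<times> bool) list set" where
  "Ha A a \<equiv> Hs A (A - {a})"

definition goodrep :: "'a set \<Rightarrow> 'a \<Rightarrow> ('a \<times> bool) list \<Rightarrow> bool" where
  "goodrep A a r \<longleftrightarrow> r \<in> carrier (FG A) \<and> (r = [] \<or> fst (hd r) = a)"

lemma rep_exists:
  assumes x: "x \<in> carrier (FG A)"
  shows "goodrep A a (dropWhile (\<lambda>l. fst l \<noteq> a) x)
     \<and> Ha A a #>\<^bsub>FG A\<^esub> x = Ha A a #>\<^bsub>FG A\<^esub> (dropWhile (\<lambda>l. fst l \<noteq> a) x)"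
proof -
  interpret G: group "FG A" by (rule group_FG)
  define p where "p = takeWhile (\<lambda>l. fst l \<noteq> a) x"
  define r where "r = dropWhile (\<lambda>l. fst l \<noteq> a) x"
  have xpr: "x = p @ r" by (simp add: p_def r_def)
  have fx: "fgr x" "\<forall>l\<in>set x. fst l \<in> A" using x by (auto simp: carrier_FG)
  have fp: "fgr p" "fgr r" using fx(1) by (simp_all add: xpr fgr_append)
  have rc: "r \<in> carrier (FG A)" using fx fp xpr by (auto simp: carrier_FG)
  have "\<forall>l\<in>set p. fst l \<in> A \<and> fst l \<noteq> a" using fx(2) unfolding p_def by (auto dest: set_takeWhileD)
  hence pH: "p \<in> Ha A a" using fp by (auto simp: Hs_def carrier_FG)
  have pc: "p \<in> carrier (FG A)" using pH Hs_subset by blast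
  have hdr: "r = [] \<or> fst (hd r) = a" 
    using hd_dropWhile[of "\<lambda>l. fst l \<noteq> a" x] unfolding r_def by blast
  have xm: "x = p \<otimes>\<^bsub>FG A\<^esub> r" using fx xpr by (simp add: mult_FG fgred_id)
  have "Ha A a #>\<^bsub>FG A\<^esub> x = (Ha A a #>\<^bsub>FG A\<^esub> p) #>\<^bsub>FG A\<^esub> r"
    using G.coset_mult_assoc[OF Hs_subset pc rc] xm by simp
  also have "Ha A a #>\<^bsub>FG A\<^esub> p = Ha A a" using G.coset_join2[OF pc subgroup_Hs pH] .
  finally have "Ha A a #>\<^bsub>FG A\<^esub> x = Ha A a #>\<^bsub>FG A\<^esub> r" .
  thus ?thesis using rc hdr by (simp add: goodrep_def r_def)
qed

lemma rep_mem:
  assumes r: "goodrep A a r"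
  shows "y \<in> Ha A a #>\<^bsub>FG A\<^esub> r \<longleftrightarrow> (\<exists>w \<in> Ha A a. y = w @ r)"
proof -
  have "w \<otimes>\<^bsub>FG A\<^esub> r = w @ r" if "w \<in> Ha A a" for w
  proof -
    have "fgr w" "fgr r" "\<forall>l\<in>set w. fst l \<noteq> a" using that r by (auto simp: Hs_def carrier_FG goodrep_def)
    hence "fgr (w @ r)" using r by (auto simp: fgr_append fgc_def goodrep_def)
    thus ?thesis by (simp add: mult_FG fgred_id)
  qed
  thus ?thesis by (auto simp: r_coset_def)
qed

lemma rep_key:
  assumes r: "goodrep A a r" and r': "goodrep A a' r'"
    and ne: "(Ha A a #>\<^bsub>FG A\<^esub> r) \<inter> (Ha A a' #>\<^bsub>FG A\<^esub> r') \<noteq> {}"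
    and len: "length r \<le> length r'"
  shows "r' \<in> Ha A a #>\<^bsub>FG A\<^esub> r"
proof -
  obtain y where y: "y \<in> Ha A a #>\<^bsub>FG A\<^esub> r" "y \<in> Ha A a' #>\<^bsub>FG A\<^esub> r'" using ne by blast
  obtain w where w: "w \<in> Ha A a" "y = w @ r" using y(1) rep_mem[OF r] by blast
  obtain w' where w': "w' \<in> Ha A a'" "y = w' @ r'" using y(2) rep_mem[OF r'] by blast
  have "w @ r = w' @ r'" using w w' by simp
  hence "\<exists>us. w = w' @ us \<and> us @ r = r' \<or> w @ us = w' \<and> r = us @ r'"
    by (simp add: append_eq_append_conv2)
  then obtain u where u: "r' = u @ r" "w = w' @ u"
  proof (elim exE disjE conjE)
    fix us assume a1: "w = w' @ us" "us @ r = r'" show ?thesis by (rule that[of us]) (use a1 in auto)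
  next
    fix us assume a1: "w @ us = w'" "r = us @ r'"
    hence "us = []" using len by simp
    show ?thesis by (rule that[of "[]"]) (use a1 \<open>us = []\<close> in auto)
  qed
  have "fgr r'" "\<forall>l\<in>set r'. fst l \<in> A" using r' by (auto simp: goodrep_def carrier_FG)
  hence "u \<in> Ha A a" using u w(1) by (auto simp: Hs_def carrier_FG fgr_append)
  thus ?thesis using rep_mem[OF r] u by blast
qed

lemma Helly_FG:
  assumes fin: "finite K" and ne: "K \<noteq> {}"
    and ax: "\<And>k. k \<in> K \<Longrightarrow> x k \<in> carrier (FG A)"
    and pw: "\<And>k l. k \<in> K \<Longrightarrow> l \<in> K \<Longrightarrow> (Ha A (a k) #>\<^bsub>FG A\<^esub> x k) \<inter> (Ha A (a l) #>\<^bsub>FG A\<^esub> x l) \<noteq> {}"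
  shows "\<exists>y \<in> carrier (FG A). \<forall>k\<in>K. y \<in> Ha A (a k) #>\<^bsub>FG A\<^esub> x k"
proof -
  define r where "r k = dropWhile (\<lambda>l. fst l \<noteq> a k) (x k)" for k
  have gr: "goodrep A (a k) (r k)" and eq: "Ha A (a k) #>\<^bsub>FG A\<^esub> x k = Ha A (a k) #>\<^bsub>FG A\<^esub> r k"
    if "k \<in> K" for k using rep_exists[OF ax[OF that], of "a k"] by (auto simp: r_def)
  obtain m where m: "m \<in> K" "\<forall>k\<in>K. length (r k) \<le> length (r m)"
  proof -
    have "Max ((\<lambda>k. length (r k)) ` K) \<in> (\<lambda>k. length (r k)) ` K" using fin ne by simp
    then obtain m where "m \<in> K" "length (r m) = Max ((\<lambda>k. length (r k)) ` K)" by auto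
    thus ?thesis using that fin by auto
  qed
  have "\<forall>k\<in>K. r m \<in> Ha A (a k) #>\<^bsub>FG A\<^esub> x k"
  proof
    fix k assume k: "k \<in> K"
    have "r m \<in> Ha A (a k) #>\<^bsub>FG A\<^esub> r k"
      using rep_key[OF gr[OF k] gr[OF m(1)]] pw[OF k m(1)] eq[OF k] eq[OF m(1)] m(2) k by simp
    thus "r m \<in> Ha A (a k) #>\<^bsub>FG A\<^esub> x k" using eq[OF k] by simp
  qed
  moreover have "r m \<in> carrier (FG A)" using gr[OF m(1)] by (simp add: goodrep_def)
  ultimately show ?thesis by blast
qed



definition Sc :: "nat \<Rightarrow> letter list set" where
  "Sc n = {[c, (i, False), flp c] | c i. fst c < n \<and> i < n \<and> i \<noteq> fst c}"

abbreviation Fn :: "nat \<Rightarrow> letter list monoid" where "Fn n \<equiv> FG {..<n}"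

lemma group_Fn: "group (FreeGrp n)" by (simp add: FreeGrp_FG group_FG)

lemma gen_carrier: "i < n \<Longrightarrow> gen i \<in> carrier (FreeGrp n)"
  by (simp add: FreeGrp_FG carrier_FG gen_def)

lemma inv_gen: "i < n \<Longrightarrow> inv\<^bsub>FreeGrp n\<^esub> gen i = [(i, True)]"
  by (simp add: FreeGrp_FG inv_FG carrier_FG gen_def finv_def flp_def)

lemma Sset_Sc: "Sset n = Sc n"
proof -
  have a: "gen j \<otimes>\<^bsub>FreeGrp n\<^esub> gen i \<otimes>\<^bsub>FreeGrp n\<^esub> inv\<^bsub>FreeGrp n\<^esub> (gen j) = [(j,False),(i,False),(j,True)]"
    if "i < n" "j < n" "i \<noteq> j" for i j
    using that by (simp add: inv_gen) (simp add: FreeGrp_FG mult_FG gen_def fgred_id fgc_def)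
  have b: "inv\<^bsub>FreeGrp n\<^esub> (gen j) \<otimes>\<^bsub>FreeGrp n\<^esub> gen i \<otimes>\<^bsub>FreeGrp n\<^esub> gen j = [(j,True),(i,False),(j,False)]"
    if "i < n" "j < n" "i \<noteq> j" for i j
    using that by (simp add: inv_gen) (simp add: FreeGrp_FG mult_FG gen_def fgred_id fgc_def)
  show ?thesis
  proof
    show "Sset n \<subseteq> Sc n"
      unfolding Sset_def Sc_def
    proof (safe)
      fix i j assume h: "i < n" "j < n" "i \<noteq> j"
      show "\<exists>c ia. gen j \<otimes>\<^bsub>FreeGrp n\<^esub> gen i \<otimes>\<^bsub>FreeGrp n\<^esub> inv\<^bsub>FreeGrp n\<^esub> gen j = [c, (ia, False), flp c] \<and> fst c < n \<and> ia < n \<and> ia \<noteq> fst c"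
        by (rule exI[of _ "(j,False)"], rule exI[of _ i]) (use h a in \<open>auto simp: flp_def\<close>)
      show "\<exists>c ia. inv\<^bsub>FreeGrp n\<^esub> gen j \<otimes>\<^bsub>FreeGrp n\<^esub> gen i \<otimes>\<^bsub>FreeGrp n\<^esub> gen j = [c, (ia, False), flp c] \<and> fst c < n \<and> ia < n \<and> ia \<noteq> fst c"
        by (rule exI[of _ "(j,True)"], rule exI[of _ i]) (use h b in \<open>auto simp: flp_def\<close>)
    qed
    show "Sc n \<subseteq> Sset n"
    proof
      fix s assume "s \<in> Sc n"
      then obtain a e i where h: "s = [(a,e), (i, False), flp (a,e)]" "a < n" "i < n" "i \<noteq> a"
        by (auto simp: Sc_def)
      show "s \<in> Sset n"
      proof (cases e)
        case True thus ?thesis using h b[of i a] unfolding Sset_def by (auto simp: flp_def)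
      next
        case False thus ?thesis using h a[of i a] unfolding Sset_def by (auto simp: flp_def)
      qed
    qed
  qed
qed

lemma Sc_form: "s \<in> Sc n \<Longrightarrow> s = [hd s, (fst (s!1), False), flp (hd s)] \<and> fst (hd s) < n \<and> fst (s!1) < n \<and> fst (s!1) \<noteq> fst (hd s)"
  by (auto simp: Sc_def)

lemma Sc_carrier: "Sc n \<subseteq> carrier (Fn n)"
  by (auto simp: Sc_def carrier_FG fgc_def flp_def)

definition Phi :: "nat \<Rightarrow> (letter list \<times> bool) list \<Rightarrow> letter list" where
  "Phi n = fgext (Fn n) id"

lemma Phi_hom: "Phi n \<in> hom (FG (Sc n)) (Fn n)"
  unfolding Phi_def by (rule fgext_hom[OF group_FG]) (use Sc_carrier in auto)

lemma Phi_group_hom: "group_hom (FG (Sc n)) (Fn n) (Phi n)"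
  by (simp add: group_hom_def group_hom_axioms_def group_FG Phi_hom)



lemma fgval_Sc: "s \<in> Sc n \<Longrightarrow> fgval (Fn n) id (s, b) = [hd s, (fst (s!1), b), flp (hd s)]"
proof -
  assume s: "s \<in> Sc n"
  then obtain c i where ci: "s = [c, (i, False), flp c]" "fst c < n" "i < n" "i \<noteq> fst c" by (auto simp: Sc_def)
  have sc: "s \<in> carrier (Fn n)" using s Sc_carrier by blast
  show ?thesis
  proof (cases b)
    case True
    thus ?thesis using ci sc by (simp add: fgval_def inv_FG finv_def flp_def)
  qed (use ci in \<open>simp add: fgval_def\<close>)
qed

lemma Phi_carrier: "w \<in> carrier (FG (Sc n)) \<Longrightarrow> Phi n w \<in> carrier (Fn n)"
  using Phi_hom by (auto simp: hom_def)

lemma Phi_head: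
  assumes w: "w \<in> carrier (FG (Sc n))" and ne: "w \<noteq> []"
  shows "\<exists>Z. Phi n w = hd (fst (hd w)) # (fst (fst (hd w) ! 1), snd (hd w)) # Z"
  using w ne
proof (induction w)
  case (Cons l w')
  obtain s b where l: "l = (s, b)" by force
  have s: "s \<in> Sc n" using Cons.prems l by (auto simp: carrier_FG)
  obtain c i where ci: "s = [c, (i, False), flp c]" "fst c < n" "i < n" "i \<noteq> fst c"
    using s by (auto simp: Sc_def)
  have w'c: "w' \<in> carrier (FG (Sc n))" using Cons.prems by (auto simp: carrier_FG fgr_Cons)
  have Pw': "Phi n w' \<in> carrier (Fn n)" using Phi_carrier[OF w'c] .
  hence rw': "fgr (Phi n w')" by (simp add: carrier_FG)
  have "Phi n (l # w') = fgred ([c, (i, b), flp c] @ Phi n w')"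
    using fgval_Sc[OF s, of b] ci by (simp add: Phi_def l mult_FG)
  also have "\<dots> = foldr fgrc [c, (i, b), flp c] (Phi n w')"
    unfolding fgred_append fgred_id[OF rw'] by (rule refl)
  finally have eq: "Phi n (l # w') = fgrc c (fgrc (i, b) (fgrc (flp c) (Phi n w')))" by simp
  have ncm: "\<not> fgc c (i, b)" "\<not> fgc (i, b) (flp c)" using ci by (auto simp: fgc_def)
  show ?case
  proof (cases "w' = []")
    case True
    thus ?thesis using eq ncm ci l by (simp add: Phi_def one_FG)
  next
    case False
    then obtain l' w'' where w'': "w' = l' # w''" by (cases w') auto
    obtain s' b' where l': "l' = (s', b')" by force
    have s': "s' \<in> Sc n" using Cons.prems l' w'' by (auto simp: carrier_FG)
    obtain c' i' where ci': "s' = [c', (i', False), flp c']" "fst c' < n" "i' < n" "i' \<noteq> fst c'"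
      using s' by (auto simp: Sc_def)
    obtain Z where Z: "Phi n w' = c' # (i', b') # Z" using Cons.IH[OF w'c False] w'' l' ci' by auto
    have nll: "\<not> fgc l l'" using Cons.prems w'' by (simp add: carrier_FG)
    show ?thesis
    proof (cases "c' = c")
      case True
      have "\<not> fgc (i, b) (i', b')" using nll l l' ci ci' True by (auto simp: fgc_def)
      hence "Phi n (l # w') = c # (i, b) # (i', b') # Z" using eq Z True ncm by simp
      thus ?thesis using l ci by simp
    next
      case False
      have "\<not> fgc (flp c) c'" using False by (cases c; cases c') (auto simp: fgc_def flp_def)
      moreover have "\<not> fgc (i, b) (flp c)" using ci by (auto simp: fgc_def)
      ultimately have "Phi n (l # w') = c # (i, b) # flp c # c' # (i', b') # Z" using eq Z ncm by simp
      thus ?thesis using l ci by simp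
    qed
  qed
qed simp

lemma Phi_inj: "inj_on (Phi n) (carrier (FG (Sc n)))"
proof -
  interpret P: group_hom "FG (Sc n)" "Fn n" "Phi n" by (rule Phi_group_hom)
  have "kernel (FG (Sc n)) (Fn n) (Phi n) = {\<one>\<^bsub>FG (Sc n)\<^esub>}"
  proof
    show "kernel (FG (Sc n)) (Fn n) (Phi n) \<subseteq> {\<one>\<^bsub>FG (Sc n)\<^esub>}"
    proof
      fix w assume "w \<in> kernel (FG (Sc n)) (Fn n) (Phi n)"
      hence w: "w \<in> carrier (FG (Sc n))" "Phi n w = []" by (auto simp: kernel_def one_FG)
      show "w \<in> {\<one>\<^bsub>FG (Sc n)\<^esub>}"
      proof (rule ccontr)
        assume "w \<notin> {\<one>\<^bsub>FG (Sc n)\<^esub>}"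
        hence "w \<noteq> []" by (simp add: one_FG)
        thus False using Phi_head[OF w(1)] w(2) by auto
      qed
    qed
  qed (auto simp: kernel_def)
  thus ?thesis using P.inj_iff_trivial_ker by simp
qed

lemma Phi_gens: "B \<subseteq> Sc n \<Longrightarrow> Phi n ` gensFG B = B"
proof -
  assume B: "B \<subseteq> Sc n"
  have "Phi n [(b, False)] = b" if "b \<in> B" for b
  proof -
    have "b \<in> carrier (Fn n)" using that B Sc_carrier by blast
    thus ?thesis by (simp add: Phi_def fgval_def one_FG mult_FG fgred_id carrier_FG)
  qed
  thus ?thesis by (force simp: gensFG_def)
qed

lemma Phi_Hs: "B \<subseteq> Sc n \<Longrightarrow> Phi n ` Hs (Sc n) B = generate (Fn n) B"
proof -
  assume B: "B \<subseteq> Sc n"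
  interpret P: group_hom "FG (Sc n)" "Fn n" "Phi n" by (rule Phi_group_hom)
  have "gensFG B \<subseteq> carrier (FG (Sc n))" using B by (auto simp: gensFG_def carrier_FG)
  from P.generate_img[OF this] show ?thesis using generate_Hs[OF B] Phi_gens[OF B] by simp
qed

lemma carrier_Hs: "carrier (FG A) = Hs A A" by (auto simp: Hs_def carrier_FG)

lemma Phi_G: "Phi n ` carrier (FG (Sc n)) = Ggrp n"
  using Phi_Hs[of "Sc n" n] by (simp add: carrier_Hs[symmetric] Ggrp_def Sset_Sc FreeGrp_FG)

lemma Phi_Gsub: "Phi n ` Ha (Sc n) a = Gsub n a"
  using Phi_Hs[of "Sc n - {a}" n] by (simp add: Gsub_def Sset_Sc FreeGrp_FG)



lemma hom_rcos:
  assumes h: "h \<in> hom G H" and A: "A \<subseteq> carrier G" and x: "x \<in> carrier G"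
  shows "h ` (A #>\<^bsub>G\<^esub> x) = h ` A #>\<^bsub>H\<^esub> h x"
  using assms by (auto simp: r_coset_def hom_mult[OF h] subset_iff) (force simp: hom_mult[OF h] subset_iff)

lemma Sc_finite: "finite (Sc n)"
proof -
  have "Sc n \<subseteq> (\<lambda>(c, i). [c, (i, False), flp c]) ` (({..<n} \<times> UNIV) \<times> {..<n})"
    by (auto simp: Sc_def)
  moreover have "finite (({..<n} \<times> (UNIV::bool set)) \<times> {..<n})" by simp
  ultimately show ?thesis by (meson finite_imageI finite_subset)
qed

lemma Gsub_sub: "Gsub n s = generate (Fn n) (Sc n - {s})"
  by (simp add: Gsub_def Sset_Sc FreeGrp_FG)
lemma Ggrp_sub: "Ggrp n = generate (Fn n) (Sc n)"
  by (simp add: Ggrp_def Sset_Sc FreeGrp_FG)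

lemma subgroup_gen: "B \<subseteq> Sc n \<Longrightarrow> subgroup (generate (Fn n) B) (Fn n)"
  by (rule group.generate_is_subgroup[OF group_FG]) (use Sc_carrier in auto)

lemma subgroup_Gsub: "subgroup (Gsub n s) (Fn n)"
  by (simp add: Gsub_sub subgroup_gen)
lemma subgroup_Ggrp: "subgroup (Ggrp n) (Fn n)"
  by (simp add: Ggrp_sub subgroup_gen)
lemma Gsub_Ggrp: "Gsub n s \<subseteq> Ggrp n"
  by (simp add: Gsub_sub Ggrp_sub group.mono_generate[OF group_FG])
lemma Ggrp_carrier: "Ggrp n \<subseteq> carrier (Fn n)"
  using subgroup_Ggrp subgroup.subset by blast
lemma Gsub_carrier: "Gsub n s \<subseteq> carrier (Fn n)"
  using subgroup_Gsub subgroup.subset by blast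

lemma Helly_Fn:
  assumes fin: "finite K" and ne: "K \<noteq> {}"
    and ag: "\<And>k. k \<in> K \<Longrightarrow> g k \<in> Ggrp n"
    and pw: "\<And>k l. k \<in> K \<Longrightarrow> l \<in> K \<Longrightarrow> (Gsub n (a k) #>\<^bsub>Fn n\<^esub> g k) \<inter> (Gsub n (a l) #>\<^bsub>Fn n\<^esub> g l) \<noteq> {}"
  shows "\<exists>y \<in> Ggrp n. \<forall>k\<in>K. y \<in> Gsub n (a k) #>\<^bsub>Fn n\<^esub> g k"
proof -
  define x where "x k = inv_into (carrier (FG (Sc n))) (Phi n) (g k)" for k
  have xc: "x k \<in> carrier (FG (Sc n))" and Px: "Phi n (x k) = g k" if "k \<in> K" for k
    using ag[OF that] Phi_G[of n] by (auto simp: x_def inv_into_into f_inv_into_f)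
  have im: "Phi n ` (Ha (Sc n) (a k) #>\<^bsub>FG (Sc n)\<^esub> x k) = Gsub n (a k) #>\<^bsub>Fn n\<^esub> g k" if "k \<in> K" for k
    using hom_rcos[OF Phi_hom Hs_subset xc[OF that]] Phi_Gsub Px[OF that] by simp
  have sub: "Ha (Sc n) (a k) #>\<^bsub>FG (Sc n)\<^esub> x k \<subseteq> carrier (FG (Sc n))" if "k \<in> K" for k
    by (rule monoid.r_coset_subset_G[OF group.is_monoid[OF group_FG] Hs_subset xc[OF that]])
  have "\<exists>y \<in> carrier (FG (Sc n)). \<forall>k\<in>K. y \<in> Ha (Sc n) (a k) #>\<^bsub>FG (Sc n)\<^esub> x k"
  proof (rule Helly_FG[OF fin ne xc])
    fix k l assume k: "k \<in> K" and l: "l \<in> K"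
    have "Phi n ` ((Ha (Sc n) (a k) #>\<^bsub>FG (Sc n)\<^esub> x k) \<inter> (Ha (Sc n) (a l) #>\<^bsub>FG (Sc n)\<^esub> x l)) \<noteq> {}"
      using inj_on_image_Int[OF Phi_inj sub[OF k] sub[OF l]] im[OF k] im[OF l] pw[OF k l] by simp
    thus "(Ha (Sc n) (a k) #>\<^bsub>FG (Sc n)\<^esub> x k) \<inter> (Ha (Sc n) (a l) #>\<^bsub>FG (Sc n)\<^esub> x l) \<noteq> {}" by blast
  qed
  then obtain y where y: "y \<in> carrier (FG (Sc n))" "\<forall>k\<in>K. y \<in> Ha (Sc n) (a k) #>\<^bsub>FG (Sc n)\<^esub> x k" by blast
  have "Phi n y \<in> Ggrp n" using y(1) Phi_G by blast
  moreover have "\<forall>k\<in>K. Phi n y \<in> Gsub n (a k) #>\<^bsub>Fn n\<^esub> g k" using y(2) im by blast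
  ultimately show ?thesis by blast
qed

lemma Inter_Gsub:
  assumes J: "J \<noteq> {}" "J \<subseteq> Sc n"
  shows "(\<Inter>s\<in>J. Gsub n s) = generate (Fn n) (Sc n - J)"
proof -
  obtain j where j: "j \<in> J" using J(1) by blast
  have "(\<Inter>s\<in>J. Gsub n s) = (\<Inter>s\<in>J. Phi n ` Ha (Sc n) s)" by (simp add: Phi_Gsub)
  also have "\<dots> = Phi n ` (\<Inter>s\<in>J. Ha (Sc n) s)"
    by (rule image_INT[OF Phi_inj _ j, symmetric]) (use Hs_subset in auto)
  also have "\<dots> = Phi n ` Hs (Sc n) (Sc n - J)" using Hs_Inter[OF J(1)] by simp
  also have "\<dots> = generate (Fn n) (Sc n - J)" by (rule Phi_Hs) auto
  finally show ?thesis .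
qed



abbreviation E :: "nat \<Rightarrow> (letter list \<times> letter list set) set" where
  "E n \<equiv> coset_elems (Fn n) (Ggrp n) (Sc n) (Gsub n)"

abbreviation cs :: "nat \<Rightarrow> letter list \<Rightarrow> letter list \<Rightarrow> letter list set" where
  "cs n s g \<equiv> Gsub n s #>\<^bsub>Fn n\<^esub> g"

lemma E_mem: "x \<in> E n \<longleftrightarrow> (\<exists>s\<in>Sc n. \<exists>g\<in>Ggrp n. x = (s, cs n s g))"
  by (auto simp: coset_elems_def)

lemma G_carrier: "g \<in> Ggrp n \<Longrightarrow> g \<in> carrier (Fn n)"
  using Ggrp_carrier by blast

lemma coset_self: "g \<in> Ggrp n \<Longrightarrow> g \<in> cs n s g"
  by (rule group.rcos_self[OF group_FG G_carrier subgroup_Gsub])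

lemma coset_repr: "g \<in> Ggrp n \<Longrightarrow> y \<in> cs n s g \<Longrightarrow> cs n s g = cs n s y"
  by (rule group.repr_independence[OF group_FG _ G_carrier subgroup_Gsub])

lemma coset_in_G: "g \<in> Ggrp n \<Longrightarrow> y \<in> cs n s g \<Longrightarrow> y \<in> Ggrp n"
proof -
  assume g: "g \<in> Ggrp n" and y: "y \<in> cs n s g"
  then obtain h where "h \<in> Gsub n s" "y = h \<otimes>\<^bsub>Fn n\<^esub> g" by (auto simp: r_coset_def)
  thus ?thesis using g Gsub_Ggrp subgroup.m_closed[OF subgroup_Ggrp] by blast
qed

lemma flag_inj: "is_flag (E n) coset_inc F \<Longrightarrow> inj_on fst F"
  by (auto simp: is_flag_def inj_on_def coset_inc_def)

lemma flag_types: "is_flag (E n) coset_inc F \<Longrightarrow> fst ` F \<subseteq> Sc n"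
  by (auto simp: is_flag_def E_mem)

lemma flag_finite: "is_flag (E n) coset_inc F \<Longrightarrow> finite F"
  using flag_inj flag_types Sc_finite finite_imageD finite_subset by metis

lemma flag_common:
  assumes F: "is_flag (E n) coset_inc F"
  shows "\<exists>g\<in>Ggrp n. \<forall>x\<in>F. g \<in> snd x"
proof (cases "F = {}")
  case True thus ?thesis using subgroup.one_closed[OF subgroup_Ggrp] by blast
next
  case False
  define g where "g x = (SOME g. g \<in> Ggrp n \<and> snd x = cs n (fst x) g)" for x
  have gx: "g x \<in> Ggrp n \<and> snd x = cs n (fst x) (g x)" if "x \<in> F" for x
  proof -
    have "x \<in> E n" using that F unfolding is_flag_def by blast
    then obtain s h where "s \<in> Sc n" "h \<in> Ggrp n" "x = (s, cs n s h)" unfolding E_mem by blast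
    hence "\<exists>g. g \<in> Ggrp n \<and> snd x = cs n (fst x) g" by auto
    thus ?thesis unfolding g_def by (rule someI_ex)
  qed
  have "\<exists>y \<in> Ggrp n. \<forall>x\<in>F. y \<in> cs n (fst x) (g x)"
  proof (rule Helly_Fn[OF flag_finite[OF F] False])
    show "\<And>k. k \<in> F \<Longrightarrow> g k \<in> Ggrp n" using gx by blast
    fix k l assume k: "k \<in> F" and l: "l \<in> F"
    show "cs n (fst k) (g k) \<inter> cs n (fst l) (g l) \<noteq> {}"
    proof (cases "k = l")
      case True thus ?thesis using coset_self gx[OF k] by blast
    next
      case False
      hence "coset_inc k l" using F k l by (auto simp: is_flag_def)
      thus ?thesis using gx k l by (auto simp: coset_inc_def)
    qed
  qed
  thus ?thesis using gx by auto
qed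

lemma flag_form:
  assumes F: "is_flag (E n) coset_inc F" and g: "g \<in> Ggrp n" and gF: "\<forall>x\<in>F. g \<in> snd x"
  shows "F = (\<lambda>s. (s, cs n s g)) ` fst ` F"
proof -
  have "x = (fst x, cs n (fst x) g)" if "x \<in> F" for x
  proof -
    have "x \<in> E n" using that F unfolding is_flag_def by blast
    then obtain s h where sh: "s \<in> Sc n" "h \<in> Ggrp n" "x = (s, cs n s h)" unfolding E_mem by blast
    hence "g \<in> cs n s h" using gF that by auto
    thus ?thesis using coset_repr[OF sh(2)] coset_repr[OF g] coset_self[OF g] sh g
      by (metis coset_in_G fst_conv)
  qed
  thus ?thesis by (auto simp: image_iff)
qed

lemma incidence_part: "is_incidence_system (E n) coset_inc fst (Sc n)"
proof -
  have "fst ` E n = Sc n"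
  proof
    show "fst ` E n \<subseteq> Sc n" by (auto simp: E_mem)
    show "Sc n \<subseteq> fst ` E n"
    proof
      fix s assume "s \<in> Sc n"
      hence "(s, cs n s \<one>\<^bsub>Fn n\<^esub>) \<in> E n" using subgroup.one_closed[OF subgroup_Ggrp] by (auto simp: E_mem)
      thus "s \<in> fst ` E n" by force
    qed
  qed
  thus ?thesis by (auto simp: is_incidence_system_def Sc_finite coset_inc_def)
qed

lemma chamber_flag:
  assumes g: "g \<in> Ggrp n" and T: "T \<subseteq> Sc n"
  shows "is_flag (E n) coset_inc ((\<lambda>s. (s, cs n s g)) ` T)"
  using T g coset_self[OF g] by (auto simp: is_flag_def E_mem coset_inc_def) (metis IntI empty_iff)

lemma geometry_part: "is_geometry (E n) coset_inc fst (Sc n)"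
  unfolding is_geometry_def
proof (intro allI impI)
  fix F assume F: "is_flag (E n) coset_inc F"
  obtain g where g: "g \<in> Ggrp n" "\<forall>x\<in>F. g \<in> snd x" using flag_common[OF F] by blast
  let ?C = "(\<lambda>s. (s, cs n s g)) ` Sc n"
  have "is_chamber (E n) coset_inc fst (Sc n) ?C"
    unfolding is_chamber_def using chamber_flag[OF g(1), of "Sc n"] by (auto simp: image_image)
  moreover have "F \<subseteq> ?C" using flag_form[OF F g] flag_types[OF F] by blast
  ultimately show "\<exists>C. is_chamber (E n) coset_inc fst (Sc n) C \<and> F \<subseteq> C" by blast
qed

lemma flag_trans_part: "flag_transitive (Fn n) (Ggrp n) (Sc n) (Gsub n)"
  unfolding flag_transitive_def
proof (intro allI impI, elim conjE)
  fix J F1 F2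
  assume F1: "is_flag (E n) coset_inc F1" and J1: "fst ` F1 = J"
    and F2: "is_flag (E n) coset_inc F2" and J2: "fst ` F2 = J"
  obtain g1 where g1: "g1 \<in> Ggrp n" "\<forall>x\<in>F1. g1 \<in> snd x" using flag_common[OF F1] by blast
  obtain g2 where g2: "g2 \<in> Ggrp n" "\<forall>x\<in>F2. g2 \<in> snd x" using flag_common[OF F2] by blast
  interpret G: group "Fn n" by (rule group_FG)
  define h where "h = inv\<^bsub>Fn n\<^esub> g1 \<otimes>\<^bsub>Fn n\<^esub> g2"
  have hG: "h \<in> Ggrp n" unfolding h_def
    using g1 g2 subgroup.m_closed[OF subgroup_Ggrp] subgroup.m_inv_closed[OF subgroup_Ggrp] by blast
  have gh: "g1 \<otimes>\<^bsub>Fn n\<^esub> h = g2" unfolding h_def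
    using G_carrier[OF g1(1)] G_carrier[OF g2(1)] by (simp add: G.m_assoc[symmetric])
  have "coset_act (Fn n) h (s, cs n s g1) = (s, cs n s g2)" for s
    using G.coset_mult_assoc[OF Gsub_carrier G_carrier[OF g1(1)] G_carrier[OF hG]] gh
    by (simp add: coset_act_def)
  hence "coset_act (Fn n) h ` F1 = F2"
    using flag_form[OF F1 g1] flag_form[OF F2 g2] J1 J2 by (metis (no_types, lifting) image_cong image_image)
  thus "\<exists>h\<in>Ggrp n. coset_act (Fn n) h ` F1 = F2" using hG by blast
qed



lemma card2_other: "2 \<le> card A \<Longrightarrow> \<exists>t\<in>A. t \<noteq> u"
proof (rule ccontr)
  assume c: "2 \<le> card A" and "\<not> (\<exists>t\<in>A. t \<noteq> u)"
  hence "A \<subseteq> {u}" by blast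
  hence "card A \<le> card {u}" by (rule card_mono[rotated]) simp
  thus False using c by simp
qed

lemma resid_part: "residually_connected (E n) coset_inc fst (Sc n)"
  unfolding residually_connected_def
proof (intro allI impI, elim conjE)
  fix F assume F: "is_flag (E n) coset_inc F" and c2: "2 \<le> card (Sc n - fst ` F)"
  interpret G: group "Fn n" by (rule group_FG)
  define J where "J = fst ` F"
  have JS: "J \<subseteq> Sc n" using flag_types[OF F] by (simp add: J_def)
  obtain g where g: "g \<in> Ggrp n" "\<forall>x\<in>F. g \<in> snd x" using flag_common[OF F] by blast
  have gc: "g \<in> carrier (Fn n)" using G_carrier[OF g(1)] .
  have Fform: "F = (\<lambda>s. (s, cs n s g)) ` J" using flag_form[OF F g] by (simp add: J_def)
  define GJ where "GJ = generate (Fn n) (Sc n - J)"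
  have GJsg: "subgroup GJ (Fn n)" unfolding GJ_def by (rule subgroup_gen) blast
  have GJ_G: "GJ \<subseteq> Ggrp n" unfolding GJ_def Ggrp_sub by (rule G.mono_generate) blast
  have GJ_sub: "GJ \<subseteq> Gsub n s" if "s \<in> J" for s
    unfolding GJ_def Gsub_sub by (rule G.mono_generate) (use that in blast)
  have hgG: "h \<otimes>\<^bsub>Fn n\<^esub> g \<in> Ggrp n" if "h \<in> GJ" for h
    using that GJ_G g(1) subgroup.m_closed[OF subgroup_Ggrp] by blast
  have c2': "2 \<le> card (Sc n - J)" using c2 by (simp add: J_def)
  define R where "R = residue (E n) coset_inc F"
  have memR: "(t, cs n t (h \<otimes>\<^bsub>Fn n\<^esub> g)) \<in> R" if t: "t \<in> Sc n - J" and h: "h \<in> GJ" for t h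
  proof -
    have "(t, cs n t (h \<otimes>\<^bsub>Fn n\<^esub> g)) \<in> E n" using t hgG[OF h] by (auto simp: E_mem)
    moreover have "(t, cs n t (h \<otimes>\<^bsub>Fn n\<^esub> g)) \<notin> F" using t Fform by auto
    moreover have "coset_inc (t, cs n t (h \<otimes>\<^bsub>Fn n\<^esub> g)) y" if y: "y \<in> F" for y
    proof -
      obtain s where s: "s \<in> J" "y = (s, cs n s g)" using y Fform by auto
      have "h \<in> Gsub n s" using GJ_sub[OF s(1)] h by blast
      hence "h \<otimes>\<^bsub>Fn n\<^esub> g \<in> cs n s g" by (rule G.rcosI[OF _ Gsub_carrier gc])
      moreover have "h \<otimes>\<^bsub>Fn n\<^esub> g \<in> cs n t (h \<otimes>\<^bsub>Fn n\<^esub> g)" using coset_self[OF hgG[OF h]] .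
      ultimately show ?thesis using s t by (auto simp: coset_inc_def)
    qed
    ultimately show ?thesis by (auto simp: R_def residue_def)
  qed
  have Rform: "\<exists>t\<in>Sc n - J. \<exists>h\<in>GJ. x = (t, cs n t (h \<otimes>\<^bsub>Fn n\<^esub> g))" if x: "x \<in> R" for x
  proof -
    have xE: "x \<in> E n" and xF: "x \<notin> F" and xinc: "\<forall>y\<in>F. coset_inc x y"
      using x by (auto simp: R_def residue_def)
    obtain t k where tk: "t \<in> Sc n" "k \<in> Ggrp n" "x = (t, cs n t k)" using xE by (auto simp: E_mem)
    have tJ: "t \<notin> J"
    proof
      assume "t \<in> J"
      hence "(t, cs n t g) \<in> F" using Fform by auto
      thus False using xinc tk by (auto simp: coset_inc_def)
    qed
    have F': "is_flag (E n) coset_inc (insert x F)"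
      using F xE xinc by (auto simp: is_flag_def coset_inc_def)
    obtain k' where k': "k' \<in> Ggrp n" "\<forall>y\<in>insert x F. k' \<in> snd y" using flag_common[OF F'] by blast
    have "k' \<in> cs n t k" using k'(2) tk(3) by simp
    hence xk': "x = (t, cs n t k')" using tk(3) coset_repr[OF tk(2)] by simp
    define h where "h = k' \<otimes>\<^bsub>Fn n\<^esub> inv\<^bsub>Fn n\<^esub> g"
    have k'c: "k' \<in> carrier (Fn n)" using G_carrier[OF k'(1)] .
    have hk: "h \<otimes>\<^bsub>Fn n\<^esub> g = k'" unfolding h_def using k'c gc by (simp add: G.m_assoc)
    have hJ: "h \<in> Gsub n s" if "s \<in> J" for s
    proof -
      have "(s, cs n s g) \<in> F" using that Fform by auto
      hence "k' \<in> cs n s g" using k' by auto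
      thus ?thesis unfolding h_def
        using subgroup.rcos_module_imp[OF subgroup_Gsub group_FG gc] by blast
    qed
    have "h \<in> GJ"
    proof (cases "J = {}")
      case True
      hence "GJ = Ggrp n" by (simp add: GJ_def Ggrp_sub)
      thus ?thesis unfolding h_def using k'(1) g(1) subgroup.m_closed[OF subgroup_Ggrp]
          subgroup.m_inv_closed[OF subgroup_Ggrp] by blast
    next
      case False
      have "(\<Inter>s\<in>J. Gsub n s) = GJ" unfolding GJ_def by (rule Inter_Gsub[OF False JS])
      thus ?thesis using hJ by blast
    qed
    thus ?thesis using xk' hk tk(1) tJ by auto
  qed
  define Ed where "Ed = (\<lambda>a b. a \<in> R \<and> b \<in> R \<and> coset_inc a b)"
  obtain t0 where t0: "t0 \<in> Sc n - J" using card2_other[OF c2', of undefined] by blast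
  define b0 where "b0 = (t0, cs n t0 (\<one>\<^bsub>Fn n\<^esub> \<otimes>\<^bsub>Fn n\<^esub> g))"
  have oneGJ: "\<one>\<^bsub>Fn n\<^esub> \<in> GJ" using subgroup.one_closed[OF GJsg] .
  have adj: "Ed (t, cs n t (h \<otimes>\<^bsub>Fn n\<^esub> g)) (t', cs n t' (h \<otimes>\<^bsub>Fn n\<^esub> g))"
    if "t \<in> Sc n - J" "t' \<in> Sc n - J" "t \<noteq> t'" "h \<in> GJ" for t t' h
    using that memR coset_self[OF hgG[OF that(4)]] by (auto simp: Ed_def coset_inc_def) (metis IntI empty_iff)
  define P where "P h \<longleftrightarrow> (\<forall>t\<in>Sc n - J. Ed\<^sup>*\<^sup>* (t, cs n t (h \<otimes>\<^bsub>Fn n\<^esub> g)) b0)" for h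
  have P1: "P \<one>\<^bsub>Fn n\<^esub>" unfolding P_def
  proof
    fix t assume t: "t \<in> Sc n - J"
    show "Ed\<^sup>*\<^sup>* (t, cs n t (\<one>\<^bsub>Fn n\<^esub> \<otimes>\<^bsub>Fn n\<^esub> g)) b0"
    proof (cases "t = t0")
      case True thus ?thesis by (simp add: b0_def)
    next
      case False
      thus ?thesis using adj[OF t t0 False oneGJ] unfolding b0_def by auto
    qed
  qed
  have Pstep: "P (e \<otimes>\<^bsub>Fn n\<^esub> k)"
    if u: "u \<in> Sc n - J" and e: "e = u \<or> e = inv\<^bsub>Fn n\<^esub> u" and k: "k \<in> GJ" and Pk: "P k" for u e k
    unfolding P_def
  proof
    fix t assume t: "t \<in> Sc n - J"
    obtain t' where t': "t' \<in> Sc n - J" "t' \<noteq> u" using card2_other[OF c2', of u] by blast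
    have uc: "u \<in> carrier (Fn n)" using u Sc_carrier by blast
    have eGJ: "e \<in> GJ" using e u unfolding GJ_def by (auto intro: generate.incl generate.inv)
    have ec: "e \<in> carrier (Fn n)" using e uc by auto
    have kc: "k \<in> carrier (Fn n)" using k GJsg subgroup.subset by blast
    have "e \<in> Gsub n t'" using e u t' unfolding Gsub_sub by (auto intro: generate.incl generate.inv)
    hence "cs n t' (e \<otimes>\<^bsub>Fn n\<^esub> k \<otimes>\<^bsub>Fn n\<^esub> g) = cs n t' (k \<otimes>\<^bsub>Fn n\<^esub> g)"
      using G.coset_mult_assoc[OF Gsub_carrier ec G.m_closed[OF kc gc], symmetric]
        G.coset_join2[OF ec subgroup_Gsub] by (simp add: G.m_assoc ec kc gc)
    hence c1: "Ed\<^sup>*\<^sup>* (t', cs n t' (e \<otimes>\<^bsub>Fn n\<^esub> k \<otimes>\<^bsub>Fn n\<^esub> g)) b0" using Pk t' unfolding P_def by simp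
    have ekGJ: "e \<otimes>\<^bsub>Fn n\<^esub> k \<in> GJ" using subgroup.m_closed[OF GJsg eGJ k] .
    show "Ed\<^sup>*\<^sup>* (t, cs n t (e \<otimes>\<^bsub>Fn n\<^esub> k \<otimes>\<^bsub>Fn n\<^esub> g)) b0"
    proof (cases "t = t'")
      case True thus ?thesis using c1 by simp
    next
      case False
      show ?thesis using converse_rtranclp_into_rtranclp[OF adj[OF t t'(1) False ekGJ] c1] .
    qed
  qed
  have Q: "\<forall>k\<in>GJ. P k \<longrightarrow> P (h \<otimes>\<^bsub>Fn n\<^esub> k)" if h: "h \<in> GJ" for h
    using h unfolding GJ_def
  proof (induction h rule: generate.induct)
    case one
    show ?case using GJsg subgroup.subset unfolding GJ_def by (metis G.l_one subsetD)
  next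
    case (incl u) thus ?case using Pstep unfolding GJ_def by blast
  next
    case (inv u) thus ?case using Pstep unfolding GJ_def by blast
  next
    case (eng h1 h2)
    show ?case
    proof (intro ballI impI)
      fix k assume k: "k \<in> generate (Fn n) (Sc n - J)" and Pk: "P k"
      have c: "h1 \<in> carrier (Fn n)" "h2 \<in> carrier (Fn n)" "k \<in> carrier (Fn n)"
        using eng.hyps k GJsg subgroup.subset unfolding GJ_def by blast+
      have "h2 \<otimes>\<^bsub>Fn n\<^esub> k \<in> generate (Fn n) (Sc n - J)"
        using subgroup.m_closed[OF GJsg] eng.hyps k unfolding GJ_def by blast
      hence "P (h1 \<otimes>\<^bsub>Fn n\<^esub> (h2 \<otimes>\<^bsub>Fn n\<^esub> k))" using eng.IH Pk k by blast
      thus "P (h1 \<otimes>\<^bsub>Fn n\<^esub> h2 \<otimes>\<^bsub>Fn n\<^esub> k)" using c by (simp add: G.m_assoc)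
    qed
  qed
  have Pall: "P h" if "h \<in> GJ" for h
  proof -
    have "P (h \<otimes>\<^bsub>Fn n\<^esub> \<one>\<^bsub>Fn n\<^esub>)" using Q[OF that] oneGJ P1 by blast
    thus ?thesis using that GJsg subgroup.subset by (metis G.r_one subsetD)
  qed
  have conn: "Ed\<^sup>*\<^sup>* x b0" if "x \<in> R" for x
    using Rform[OF that] Pall unfolding P_def by blast
  have "symp Ed" by (auto simp: symp_def Ed_def coset_inc_def)
  hence sy: "symp Ed\<^sup>*\<^sup>*" by (rule symp_rtranclp)
  have "Ed\<^sup>*\<^sup>* x y" if "x \<in> R" "y \<in> R" for x y
    using conn[OF that(1)] conn[OF that(2)] sy by (meson rtranclp_trans sympD)
  thus "graph_connected (residue (E n) coset_inc F) coset_inc"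
    unfolding graph_connected_def R_def[symmetric] Ed_def by blast
qed



lemma fsubst_eq: "fsubst n f = restrict (fgext (Fn n) f) (carrier (Fn n))"
  unfolding fsubst_def fgext_def fgval_def FreeGrp_FG ..

lemma fsubst_hom: "(\<And>i. i < n \<Longrightarrow> f i \<in> carrier (Fn n)) \<Longrightarrow> fsubst n f \<in> hom (Fn n) (Fn n)"
proof -
  assume f: "\<And>i. i < n \<Longrightarrow> f i \<in> carrier (Fn n)"
  have h: "fgext (Fn n) f \<in> hom (Fn n) (Fn n)" by (rule fgext_hom[OF group_FG]) (use f in auto)
  show ?thesis unfolding fsubst_eq using h
    by (auto simp: hom_def group.is_monoid[OF group_FG] monoid.m_closed)
qed

lemma fsubst_single: "i < n \<Longrightarrow> f i \<in> carrier (Fn n) \<Longrightarrow>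
   fsubst n f [(i, b)] = (if b then inv\<^bsub>Fn n\<^esub> (f i) else f i)"
proof -
  assume i: "i < n" and f: "f i \<in> carrier (Fn n)"
  have "[(i, b)] \<in> carrier (Fn n)" using i by (simp add: carrier_FG)
  moreover have "x \<otimes>\<^bsub>Fn n\<^esub> \<one>\<^bsub>Fn n\<^esub> = x" if "x \<in> carrier (Fn n)" for x
    using monoid.r_one[OF group.is_monoid[OF group_FG] that] .
  ultimately show ?thesis unfolding fsubst_eq using f
    by (simp add: fgval_def group.inv_closed[OF group_FG])
qed

lemma fsubst_gen: "i < n \<Longrightarrow> f i \<in> carrier (Fn n) \<Longrightarrow> fsubst n f (gen i) = f i"
  using fsubst_single[of i n f False] by (simp add: gen_def)

lemma hom_compose_fun: "f \<in> hom G G \<Longrightarrow> g \<in> hom G G \<Longrightarrow> (\<lambda>x. f (g x)) \<in> hom G G"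
  by (auto simp: hom_def)

lemma id_hom: "(\<lambda>x. x) \<in> hom G G" by (auto simp: hom_def)

lemma Fn_id_unique:
  assumes h: "h \<in> hom (Fn n) (Fn n)" and eq: "\<And>i. i < n \<Longrightarrow> h (gen i) = gen i"
    and w: "w \<in> carrier (Fn n)"
  shows "h w = w"
  using hom_FG_unique[OF group_FG h id_hom _ w] eq by (simp add: gen_def)

lemma auto_of_inverse:
  assumes f: "\<And>i. i < n \<Longrightarrow> f i \<in> carrier (Fn n)" and g: "\<And>i. i < n \<Longrightarrow> g i \<in> carrier (Fn n)"
    and fg: "\<And>i. i < n \<Longrightarrow> fsubst n f (fsubst n g (gen i)) = gen i"
    and gf: "\<And>i. i < n \<Longrightarrow> fsubst n g (fsubst n f (gen i)) = gen i"
  shows "fsubst n f \<in> auto (Fn n)"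
proof -
  have hf: "fsubst n f \<in> hom (Fn n) (Fn n)" by (rule fsubst_hom[OF f])
  have hg: "fsubst n g \<in> hom (Fn n) (Fn n)" by (rule fsubst_hom[OF g])
  have e1: "fsubst n f (fsubst n g w) = w" if "w \<in> carrier (Fn n)" for w
    by (rule Fn_id_unique[OF hom_compose_fun[OF hf hg] fg that])
  have e2: "fsubst n g (fsubst n f w) = w" if "w \<in> carrier (Fn n)" for w
    by (rule Fn_id_unique[OF hom_compose_fun[OF hg hf] gf that])
  have "bij_betw (fsubst n f) (carrier (Fn n)) (carrier (Fn n))"
    by (rule bij_betw_byWitness[where f'="fsubst n g"]) (use e1 e2 hf hg in \<open>auto simp: hom_def\<close>)
  moreover have "fsubst n f \<in> extensional (carrier (Fn n))" by (simp add: fsubst_eq)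
  ultimately show ?thesis using hf by (simp add: auto_def Bij_def)
qed

lemma gen_carrier': "i < n \<Longrightarrow> gen i \<in> carrier (Fn n)"
  by (simp add: carrier_FG gen_def)

lemma inv_gen': "i < n \<Longrightarrow> inv\<^bsub>Fn n\<^esub> gen i = [(i, True)]"
  by (simp add: inv_FG carrier_FG gen_def finv_def flp_def)

lemma inv_inv_Fn: "x \<in> carrier (Fn n) \<Longrightarrow> inv\<^bsub>Fn n\<^esub> (inv\<^bsub>Fn n\<^esub> x) = x"
  by (rule group.inv_inv[OF group_FG])

lemma phi1_auto: "phi1 n \<in> auto (Fn n)"
proof -
  define f where "f = (\<lambda>i. (if i = 0 then inv\<^bsub>Fn n\<^esub> (gen 0) else gen i))"
  have p: "phi1 n = fsubst n f" unfolding phi1_def f_def FreeGrp_FG by (rule refl)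
  have fc: "f i \<in> carrier (Fn n)" if "i < n" for i
    using that inv_gen'[of 0 n] by (auto simp: f_def gen_carrier' carrier_FG gen_def)
  have ff: "fsubst n f (fsubst n f (gen i)) = gen i" if "i < n" for i
  proof (cases "i = 0")
    case True
    have n0: "0 < n" using that True by simp
    have "fsubst n f (gen 0) = [(0, True)]" using fsubst_gen[of 0 n f, OF n0 fc[OF n0]] n0 by (simp add: f_def inv_gen')
    moreover have "fsubst n f [(0, True)] = gen 0" using fsubst_single[of 0 n f True, OF n0 fc[OF n0]] n0
      by (simp add: f_def inv_inv_Fn gen_carrier')
    ultimately show ?thesis using True by simp
  next
    case False thus ?thesis using fsubst_gen[of i n f, OF that fc[OF that]] by (simp add: f_def)
  qed
  show ?thesis unfolding p by (rule auto_of_inverse[OF fc fc ff ff])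
qed

lemma phi_tau_auto: assumes n: "n \<ge> 2" shows "phi_tau n \<in> auto (Fn n)"
proof -
  define f where "f = (\<lambda>i :: nat. (if i = 0 then gen 1 else if i = 1 then gen 0 else gen i))"
  have p: "phi_tau n = fsubst n f" by (simp add: phi_tau_def f_def FreeGrp_FG)
  have fc: "f i \<in> carrier (Fn n)" if "i < n" for i
    using that n by (simp add: f_def gen_carrier')
  have ff: "fsubst n f (fsubst n f (gen i)) = gen i" if "i < n" for i
    using that n fsubst_gen[of _ n f, OF _ fc] by (simp add: f_def)
  show ?thesis unfolding p by (rule auto_of_inverse[OF fc fc ff ff])
qed

lemma phi_rho_auto: assumes n: "n \<ge> 2" shows "phi_rho n \<in> auto (Fn n)"
proof -
  define f where "f = (\<lambda>i :: nat. gen ((i + 1) mod n))"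
  define g where "g = (\<lambda>i :: nat. gen ((i + (n - 1)) mod n))"
  have p: "phi_rho n = fsubst n f" by (simp add: phi_rho_def f_def FreeGrp_FG)
  have fc: "f i \<in> carrier (Fn n)" if "i < n" for i
    using that n by (simp add: f_def gen_carrier')
  have gc: "g i \<in> carrier (Fn n)" if "i < n" for i
    using that n by (simp add: g_def gen_carrier')
  have a1: "((i + (n - 1)) mod n + 1) mod n = i" if "i < n" for i
  proof -
    have "((i + (n - 1)) mod n + 1) mod n = (i + (n - 1) + 1) mod n" by (simp add: mod_Suc_eq)
    also have "i + (n - 1) + 1 = i + n" using n by simp
    finally show ?thesis using that by simp
  qed
  have a2: "((i + 1) mod n + (n - 1)) mod n = i" if "i < n" for i
  proof -
    have "((i + 1) mod n + (n - 1)) mod n = (i + 1 + (n - 1)) mod n" by (simp add: mod_add_left_eq)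
    also have "i + 1 + (n - 1) = i + n" using n by simp
    finally show ?thesis using that by simp
  qed
  have fg: "fsubst n f (fsubst n g (gen i)) = gen i" if "i < n" for i
    using that n fsubst_gen[of _ n f, OF _ fc] fsubst_gen[of _ n g, OF _ gc] a1 by (simp add: f_def g_def)
  have gf: "fsubst n g (fsubst n f (gen i)) = gen i" if "i < n" for i
    using that n fsubst_gen[of _ n f, OF _ fc] fsubst_gen[of _ n g, OF _ gc] a2 by (simp add: f_def g_def)
  show ?thesis unfolding p by (rule auto_of_inverse[OF fc gc fg gf])
qed



definition SS :: "nat \<Rightarrow> letter list set" where
  "SS n = {[c, m, flp c] | c m. fst c < n \<and> fst m < n \<and> fst m \<noteq> fst c}"

lemma SS_finite: "finite (SS n)"
proof -
  have "SS n \<subseteq> (\<lambda>(c, m). [c, m, flp c]) ` (({..<n} \<times> UNIV) \<times> ({..<n} \<times> UNIV))"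
    by (auto simp: SS_def)
  moreover have "finite (({..<n} \<times> (UNIV::bool set)) \<times> ({..<n} \<times> (UNIV::bool set)))" by simp
  ultimately show ?thesis by (meson finite_imageI finite_subset)
qed

lemma SS_carrier: "SS n \<subseteq> carrier (Fn n)"
  by (auto simp: SS_def carrier_FG fgc_def flp_def)

lemma Sc_SS: "Sc n \<subseteq> SS n" by (auto simp: Sc_def SS_def)

definition norm :: "letter list \<Rightarrow> letter list" where
  "norm w = [hd w, (fst (w!1), False), flp (hd w)]"

lemma inv_Sc: "s \<in> Sc n \<Longrightarrow> inv\<^bsub>Fn n\<^esub> s = [hd s, (fst (s!1), True), flp (hd s)]"
proof -
  assume s: "s \<in> Sc n"
  hence "s \<in> carrier (Fn n)" using Sc_carrier by blast
  thus ?thesis using s by (auto simp: inv_FG Sc_def finv_def flp_def)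
qed

lemma SS_cases: "w \<in> SS n \<Longrightarrow> norm w \<in> Sc n \<and> (w = norm w \<or> w = inv\<^bsub>Fn n\<^esub> (norm w))"
proof -
  assume w: "w \<in> SS n"
  then obtain c i b where cm: "w = [c, (i, b), flp c]" "fst c < n" "i < n" "i \<noteq> fst c"
    by (auto simp: SS_def)
  have ns: "norm w \<in> Sc n" using cm by (cases c) (auto simp: norm_def Sc_def)
  moreover have "w = norm w \<or> w = inv\<^bsub>Fn n\<^esub> (norm w)"
    using inv_Sc[OF ns] cm by (cases b) (auto simp: norm_def)
  ultimately show ?thesis by blast
qed

lemma inv_Sc_notin: "s \<in> Sc n \<Longrightarrow> inv\<^bsub>Fn n\<^esub> s \<notin> Sc n"
  using inv_Sc[of s n] by (auto simp: Sc_def)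

lemma perm_SS:
  assumes f: "\<And>i. i < n \<Longrightarrow> f i = [\<tau> i]" and t: "\<And>i. i < n \<Longrightarrow> fst (\<tau> i) < n"
    and inj: "inj_on (\<lambda>i. fst (\<tau> i)) {..<n}"
  shows "fsubst n f ` SS n \<subseteq> SS n"
proof
  fix y assume "y \<in> fsubst n f ` SS n"
  then obtain s where s: "s \<in> SS n" "y = fsubst n f s" by blast
  then obtain c m where cm: "s = [c, m, flp c]" "fst c < n" "fst m < n" "fst m \<noteq> fst c"
    by (auto simp: SS_def)
  define tp where "tp = (\<lambda>a. if snd a then flp (\<tau> (fst a)) else \<tau> (fst a))"
  have fc: "f i \<in> carrier (Fn n)" if "i < n" for i using f[OF that] t[OF that] by (simp add: carrier_FG)
  have fv: "fgval (Fn n) f a = [tp a]" if "fst a < n" for a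
    using that f fc by (auto simp: fgval_def tp_def inv_FG finv_def)
  have tpf: "tp (flp c) = flp (tp c)" by (simp add: tp_def flp_def)
  have fsttp: "fst (tp a) = fst (\<tau> (fst a))" for a by (simp add: tp_def)
  have "fst (\<tau> (fst m)) \<noteq> fst (\<tau> (fst c))" using inj_onD[OF inj _, of "fst m" "fst c"] cm by auto
  hence ne: "fst (tp m) \<noteq> fst (tp c)" by (simp add: fsttp)
  have sc: "s \<in> carrier (Fn n)" using s SS_carrier by blast
  have "y = fgext (Fn n) f s" using s sc by (simp add: fsubst_eq)
  also have "\<dots> = [tp c, tp m, flp (tp c)]"
    using cm ne fv[of c] fv[of m] fv[of "flp c"] tpf
    by (simp add: one_FG mult_FG fgred_id fgc_def flp_def)
  finally have yv: "y = [tp c, tp m, flp (tp c)]" .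
  have "fst (tp c) < n" "fst (tp m) < n" using t cm by (simp_all add: fsttp)
  thus "y \<in> SS n" unfolding SS_def using yv ne by blast
qed

lemma phi1_SS: "phi1 n ` SS n \<subseteq> SS n"
proof -
  have p: "phi1 n = fsubst n (\<lambda>i. if i = 0 then inv\<^bsub>Fn n\<^esub> (gen 0) else gen i)"
    unfolding phi1_def FreeGrp_FG by (rule refl)
  show ?thesis unfolding p
    by (rule perm_SS[where \<tau>="\<lambda>i. if i = 0 then (0, True) else (i, False)"])
       (use inv_gen'[of 0 n, unfolded gen_def] in \<open>auto simp: gen_def inj_on_def\<close>)
qed

lemma phi_tau_SS: "n \<ge> 2 \<Longrightarrow> phi_tau n ` SS n \<subseteq> SS n"
  unfolding phi_tau_def FreeGrp_FG
  by (rule perm_SS[where \<tau>="\<lambda>i. if i = 0 then (1, False) else if i = 1 then (0, False) else (i, False)"])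
     (auto simp: gen_def inj_on_def)

lemma phi_rho_SS: "n \<ge> 2 \<Longrightarrow> phi_rho n ` SS n \<subseteq> SS n"
  unfolding phi_rho_def FreeGrp_FG
  by (rule perm_SS[where \<tau>="\<lambda>i. ((i + 1) mod n, False)"])
     (auto simp: gen_def inj_on_def mod_if split: if_splits)



lemma AG_mult: "h1 \<in> auto G \<Longrightarrow> h2 \<in> auto G \<Longrightarrow> h1 \<otimes>\<^bsub>AutoGroup G\<^esub> h2 = compose (carrier G) h1 h2"
  by (simp add: AutoGroup_def BijGroup_def auto_def)
lemma AG_one: "\<one>\<^bsub>AutoGroup G\<^esub> = (\<lambda>x\<in>carrier G. x)" by (simp add: AutoGroup_def BijGroup_def)
lemma AG_carrier: "carrier (AutoGroup G) = auto G" by (simp add: AutoGroup_def BijGroup_def)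

definition goodphi :: "nat \<Rightarrow> (letter list \<Rightarrow> letter list) \<Rightarrow> bool" where
  "goodphi n \<phi> \<longleftrightarrow> \<phi> \<in> auto (Fn n) \<and> \<phi> ` SS n \<subseteq> SS n"

lemma auto_inj: "\<phi> \<in> auto G \<Longrightarrow> inj_on \<phi> (carrier G)"
  by (simp add: auto_def Bij_def bij_betw_def)
lemma auto_hom: "\<phi> \<in> auto G \<Longrightarrow> \<phi> \<in> hom G G"
  by (simp add: auto_def)

lemma good_surj: "goodphi n \<phi> \<Longrightarrow> \<phi> ` SS n = SS n"
  unfolding goodphi_def
  by (meson SS_carrier SS_finite auto_inj endo_inj_surj inj_on_subset)

lemma good_inv: "goodphi n \<phi> \<Longrightarrow> goodphi n (inv\<^bsub>AutoGroup (Fn n)\<^esub> \<phi>)"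
proof -
  assume g: "goodphi n \<phi>"
  interpret A: group "AutoGroup (Fn n)" by (rule group.AutoGroup[OF group_FG])
  have pa: "\<phi> \<in> carrier (AutoGroup (Fn n))" using g by (simp add: goodphi_def AG_carrier)
  define \<psi> where "\<psi> = inv\<^bsub>AutoGroup (Fn n)\<^esub> \<phi>"
  have psa: "\<psi> \<in> auto (Fn n)" using A.inv_closed[OF pa] by (simp add: \<psi>_def AG_carrier)
  have "\<psi> \<otimes>\<^bsub>AutoGroup (Fn n)\<^esub> \<phi> = \<one>\<^bsub>AutoGroup (Fn n)\<^esub>" using A.l_inv[OF pa] by (simp add: \<psi>_def)
  hence "compose (carrier (Fn n)) \<psi> \<phi> = (\<lambda>x\<in>carrier (Fn n). x)"
    using psa pa by (simp add: AG_mult AG_one AG_carrier)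
  hence pp: "\<psi> (\<phi> y) = y" if "y \<in> carrier (Fn n)" for y
    using that by (metis compose_eq restrict_apply')
  have "\<psi> ` SS n \<subseteq> SS n"
  proof
    fix x assume "x \<in> \<psi> ` SS n"
    then obtain z where z: "z \<in> SS n" "x = \<psi> z" by blast
    then obtain y where y: "y \<in> SS n" "z = \<phi> y" using good_surj[OF g] by blast
    have "y \<in> carrier (Fn n)" using y(1) SS_carrier by blast
    thus "x \<in> SS n" using pp[of y] z y by simp
  qed
  thus ?thesis using psa by (simp add: goodphi_def \<psi>_def)
qed

lemma good_mult: "goodphi n \<phi>1 \<Longrightarrow> goodphi n \<phi>2 \<Longrightarrow> goodphi n (\<phi>1 \<otimes>\<^bsub>AutoGroup (Fn n)\<^esub> \<phi>2)"
proof -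
  assume g1: "goodphi n \<phi>1" and g2: "goodphi n \<phi>2"
  interpret A: group "AutoGroup (Fn n)" by (rule group.AutoGroup[OF group_FG])
  have "\<phi>1 \<otimes>\<^bsub>AutoGroup (Fn n)\<^esub> \<phi>2 \<in> auto (Fn n)"
    using A.m_closed g1 g2 by (simp add: goodphi_def AG_carrier)
  moreover have "(\<phi>1 \<otimes>\<^bsub>AutoGroup (Fn n)\<^esub> \<phi>2) ` SS n \<subseteq> SS n"
    using g1 g2 SS_carrier unfolding goodphi_def by (auto simp: AG_mult compose_def image_subset_iff)
  ultimately show ?thesis by (simp add: goodphi_def)
qed

lemma Kgrp_good:
  assumes n: "n \<ge> 2" and p: "\<phi> \<in> Kgrp n"
  shows "goodphi n \<phi>"
proof -
  have gens: "goodphi n h" if "h \<in> {phi1 n, phi_rho n, phi_tau n}" for h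
    using that phi1_auto phi_rho_auto[OF n] phi_tau_auto[OF n] phi1_SS phi_rho_SS[OF n] phi_tau_SS[OF n]
    by (auto simp: goodphi_def)
  have "\<phi> \<in> generate (AutoGroup (Fn n)) {phi1 n, phi_rho n, phi_tau n}"
    using p by (simp add: Kgrp_def FreeGrp_FG)
  thus ?thesis
  proof induction
    case one
    have "(\<lambda>x\<in>carrier (Fn n). x) \<in> auto (Fn n)" by (rule group.id_in_auto[OF group_FG])
    moreover have "(\<lambda>x\<in>carrier (Fn n). x) ` SS n \<subseteq> SS n" using SS_carrier by auto
    ultimately show ?case by (simp only: goodphi_def AG_one)
  next
    case (incl h) thus ?case using gens by blast
  next
    case (inv h) thus ?case using gens good_inv by blast
  next
    case (eng h1 h2) thus ?case using good_mult by blast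
  qed
qed

lemma gen_eq:
  assumes U: "U \<subseteq> carrier (Fn n)" and V: "V \<subseteq> carrier (Fn n)"
    and UV: "U \<subseteq> generate (Fn n) V" and VU: "V \<subseteq> generate (Fn n) U"
  shows "generate (Fn n) U = generate (Fn n) V"
proof -
  interpret G: group "Fn n" by (rule group_FG)
  show ?thesis
    using G.generate_subgroup_incl[OF UV G.generate_is_subgroup[OF V]]
      G.generate_subgroup_incl[OF VU G.generate_is_subgroup[OF U]] by blast
qed

lemma good_corr:
  assumes g: "goodphi n \<phi>"
  shows "\<phi> ` Ggrp n = Ggrp n \<and> (\<exists>\<sigma>. bij_betw \<sigma> (Sc n) (Sc n) \<and> (\<forall>s \<in> Sc n. \<phi> ` Gsub n s = Gsub n (\<sigma> s))
     \<and> (\<exists>\<alpha>. is_correlation (E n) coset_inc fst \<alpha>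
           \<and> (\<forall>s \<in> Sc n. \<forall>g \<in> Ggrp n. \<alpha> (s, cs n s g) = (\<sigma> s, (\<phi> ` Gsub n s) #>\<^bsub>Fn n\<^esub> \<phi> g))))"
proof -
  interpret G: group "Fn n" by (rule group_FG)
  have pa: "\<phi> \<in> auto (Fn n)" using g by (simp add: goodphi_def)
  have hom: "\<phi> \<in> hom (Fn n) (Fn n)" using auto_hom[OF pa] .
  interpret P: group_hom "Fn n" "Fn n" \<phi> by (simp add: group_hom_def group_hom_axioms_def group_FG hom)
  have inj: "inj_on \<phi> (carrier (Fn n))" using auto_inj[OF pa] .
  define \<sigma> where "\<sigma> = (\<lambda>s. norm (\<phi> s))"
  have ps: "\<sigma> s \<in> Sc n \<and> (\<phi> s = \<sigma> s \<or> \<phi> s = inv\<^bsub>Fn n\<^esub> (\<sigma> s))" if "s \<in> Sc n" for s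
  proof -
    have "\<phi> s \<in> SS n" using that Sc_SS g by (auto simp: goodphi_def)
    thus ?thesis using SS_cases by (simp add: \<sigma>_def)
  qed
  have sc: "s \<in> carrier (Fn n)" if "s \<in> Sc n" for s using that Sc_carrier by blast
  have sinj: "inj_on \<sigma> (Sc n)"
  proof (rule inj_onI)
    fix s t assume s: "s \<in> Sc n" and t: "t \<in> Sc n" and st: "\<sigma> s = \<sigma> t"
    have a: "\<phi> (inv\<^bsub>Fn n\<^esub> s) = inv\<^bsub>Fn n\<^esub> (\<phi> s)" "\<phi> (inv\<^bsub>Fn n\<^esub> t) = inv\<^bsub>Fn n\<^esub> (\<phi> t)"
      using sc[OF s] sc[OF t] by simp_all
    have b: "\<sigma> s \<in> carrier (Fn n)" using ps[OF s] sc by blast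
    show "s = t"
      using ps[OF s] ps[OF t]
    proof (elim conjE disjE)
      assume "\<phi> s = \<sigma> s" "\<phi> t = \<sigma> t"
      thus "s = t" using st inj_onD[OF inj _ sc[OF s] sc[OF t]] by simp
    next
      assume "\<phi> s = inv\<^bsub>Fn n\<^esub> \<sigma> s" "\<phi> t = inv\<^bsub>Fn n\<^esub> \<sigma> t"
      thus "s = t" using st inj_onD[OF inj _ sc[OF s] sc[OF t]] by simp
    next
      assume "\<phi> s = \<sigma> s" "\<phi> t = inv\<^bsub>Fn n\<^esub> \<sigma> t"
      hence "\<phi> t = \<phi> (inv\<^bsub>Fn n\<^esub> s)" using a st by simp
      hence "t = inv\<^bsub>Fn n\<^esub> s" using inj_onD[OF inj _ sc[OF t] G.inv_closed[OF sc[OF s]]] by simp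
      thus "s = t" using inv_Sc_notin[OF s] t by simp
    next
      assume "\<phi> s = inv\<^bsub>Fn n\<^esub> \<sigma> s" "\<phi> t = \<sigma> t"
      hence "\<phi> s = \<phi> (inv\<^bsub>Fn n\<^esub> t)" using a st by simp
      hence "s = inv\<^bsub>Fn n\<^esub> t" using inj_onD[OF inj _ sc[OF s] G.inv_closed[OF sc[OF t]]] by simp
      thus "s = t" using inv_Sc_notin[OF t] s by simp
    qed
  qed
  have sim: "\<sigma> ` Sc n = Sc n" using endo_inj_surj[OF Sc_finite _ sinj] ps by blast
  have bij: "bij_betw \<sigma> (Sc n) (Sc n)" using sinj sim by (simp add: bij_betw_def)
  have genimg: "\<phi> ` generate (Fn n) Q = generate (Fn n) (\<sigma> ` Q)" if Q: "Q \<subseteq> Sc n" for Q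
  proof -
    have Qc: "Q \<subseteq> carrier (Fn n)" using Q Sc_carrier by blast
    have "\<phi> ` generate (Fn n) Q = generate (Fn n) (\<phi> ` Q)" using P.generate_img[OF Qc] by simp
    also have "\<dots> = generate (Fn n) (\<sigma> ` Q)"
    proof (rule gen_eq)
      show "\<phi> ` Q \<subseteq> carrier (Fn n)" using Qc by auto
      show "\<sigma> ` Q \<subseteq> carrier (Fn n)" using Q ps Sc_carrier by blast
      show "\<phi> ` Q \<subseteq> generate (Fn n) (\<sigma> ` Q)"
      proof
        fix y assume "y \<in> \<phi> ` Q"
        then obtain x where x: "x \<in> Q" "y = \<phi> x" by blast
        have xs: "x \<in> Sc n" using x Q by blast
        have sq: "\<sigma> x \<in> \<sigma> ` Q" using x by blast
        show "y \<in> generate (Fn n) (\<sigma> ` Q)" using ps[OF xs] x(2)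
          generate.incl[OF sq, of "Fn n"] generate.inv[OF sq, of "Fn n"] by auto
      qed
      show "\<sigma> ` Q \<subseteq> generate (Fn n) (\<phi> ` Q)"
      proof
        fix y assume "y \<in> \<sigma> ` Q"
        then obtain x where x: "x \<in> Q" "y = \<sigma> x" by blast
        have xs: "x \<in> Sc n" using x Q by blast
        have "\<sigma> x \<in> carrier (Fn n)" using ps[OF xs] Sc_carrier by blast
        hence "\<sigma> x = \<phi> x \<or> \<sigma> x = inv\<^bsub>Fn n\<^esub> (\<phi> x)" using ps[OF xs] by auto
        moreover have pq: "\<phi> x \<in> \<phi> ` Q" using x by blast
        ultimately show "y \<in> generate (Fn n) (\<phi> ` Q)" using x(2)
          generate.incl[OF pq, of "Fn n"] generate.inv[OF pq, of "Fn n"] by auto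
      qed
    qed
    finally show ?thesis .
  qed
  have GG: "\<phi> ` Ggrp n = Ggrp n" using genimg[of "Sc n"] sim by (simp add: Ggrp_sub)
  have GS: "\<phi> ` Gsub n s = Gsub n (\<sigma> s)" if s: "s \<in> Sc n" for s
  proof -
    have "\<sigma> ` (Sc n - {s}) = \<sigma> ` Sc n - \<sigma> ` {s}"
      by (rule inj_on_image_set_diff[OF sinj]) (use s in auto)
    thus ?thesis using genimg[of "Sc n - {s}"] sim by (simp add: Gsub_sub)
  qed
  have imc: "\<phi> ` cs n s g = cs n (\<sigma> s) (\<phi> g)" if "s \<in> Sc n" "g \<in> Ggrp n" for s g
    using hom_rcos[OF hom Gsub_carrier G_carrier[OF that(2)]] GS[OF that(1)] by simp
  have imc': "\<phi> ` cs n s g = (\<phi> ` Gsub n s) #>\<^bsub>Fn n\<^esub> \<phi> g" if "s \<in> Sc n" "g \<in> Ggrp n" for s g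
    using hom_rcos[OF hom Gsub_carrier G_carrier[OF that(2)]] by simp
  define \<alpha> where "\<alpha> = (\<lambda>x. (\<sigma> (fst x), \<phi> ` snd x))"
  have csc: "cs n s g \<subseteq> carrier (Fn n)" if "g \<in> Ggrp n" for s g
    by (rule G.r_coset_subset_G[OF Gsub_carrier G_carrier[OF that]])
  have snd_c: "snd x \<subseteq> carrier (Fn n)" "fst x \<in> Sc n" if "x \<in> E n" for x
    using that csc by (auto simp: E_mem) (meson csc subsetD)
  have aE: "\<alpha> ` E n = E n"
  proof
    show "\<alpha> ` E n \<subseteq> E n"
    proof
      fix y assume "y \<in> \<alpha> ` E n"
      then obtain s g where sg: "s \<in> Sc n" "g \<in> Ggrp n" "y = \<alpha> (s, cs n s g)" by (auto simp: E_mem)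
      have "\<phi> g \<in> Ggrp n" using GG sg(2) by blast
      thus "y \<in> E n" using sg imc ps by (auto simp: E_mem \<alpha>_def)
    qed
    show "E n \<subseteq> \<alpha> ` E n"
    proof
      fix y assume "y \<in> E n"
      then obtain t h where th: "t \<in> Sc n" "h \<in> Ggrp n" "y = (t, cs n t h)" by (auto simp: E_mem)
      obtain s where s: "s \<in> Sc n" "t = \<sigma> s" using sim th(1) by blast
      obtain g where gg: "g \<in> Ggrp n" "h = \<phi> g" using GG th(2) by blast
      have "y = \<alpha> (s, cs n s g)" using th s gg imc by (simp add: \<alpha>_def)
      moreover have "(s, cs n s g) \<in> E n" using s gg by (auto simp: E_mem)
      ultimately show "y \<in> \<alpha> ` E n" by blast
    qed
  qed
  have ainj: "inj_on \<alpha> (E n)"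
  proof (rule inj_onI)
    fix x y assume x: "x \<in> E n" and y: "y \<in> E n" and e: "\<alpha> x = \<alpha> y"
    have "fst x = fst y" using e snd_c[OF x] snd_c[OF y] inj_onD[OF sinj] by (simp add: \<alpha>_def)
    moreover have "snd x = snd y" using e inj_on_image_eq_iff[OF inj snd_c(1)[OF x] snd_c(1)[OF y]]
      by (simp add: \<alpha>_def)
    ultimately show "x = y" by (simp add: prod_eq_iff)
  qed
  have corr: "is_correlation (E n) coset_inc fst \<alpha>"
    unfolding is_correlation_def
  proof (intro conjI ballI)
    show "bij_betw \<alpha> (E n) (E n)" using ainj aE by (simp add: bij_betw_def)
  next
    fix x y assume x: "x \<in> E n" and y: "y \<in> E n"
    have ft: "fst x = fst y \<longleftrightarrow> \<sigma> (fst x) = \<sigma> (fst y)"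
      using inj_on_eq_iff[OF sinj snd_c(2)[OF x] snd_c(2)[OF y]] by simp
    thus "(fst x = fst y) = (fst (\<alpha> x) = fst (\<alpha> y))" by (simp add: \<alpha>_def)
    have "\<phi> ` (snd x \<inter> snd y) = \<phi> ` snd x \<inter> \<phi> ` snd y"
      by (rule inj_on_image_Int[OF inj snd_c(1)[OF x] snd_c(1)[OF y]])
    hence "(snd x \<inter> snd y \<noteq> {}) = (\<phi> ` snd x \<inter> \<phi> ` snd y \<noteq> {})" by auto
    thus "coset_inc x y = coset_inc (\<alpha> x) (\<alpha> y)" using ft by (simp add: coset_inc_def \<alpha>_def)
  qed
  have "\<forall>s \<in> Sc n. \<forall>g \<in> Ggrp n. \<alpha> (s, cs n s g) = (\<sigma> s, (\<phi> ` Gsub n s) #>\<^bsub>Fn n\<^esub> \<phi> g)"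
    using imc' by (simp add: \<alpha>_def)
  thus ?thesis using GG bij GS corr by blast
qed

theorem mainTheorem9:
  fixes n :: nat
  assumes "n \<ge> 2"
  shows "is_incidence_system (coset_elems (FreeGrp n) (Ggrp n) (Sset n) (Gsub n)) coset_inc fst (Sset n)
   \<and> is_geometry (coset_elems (FreeGrp n) (Ggrp n) (Sset n) (Gsub n)) coset_inc fst (Sset n)
   \<and> residually_connected (coset_elems (FreeGrp n) (Ggrp n) (Sset n) (Gsub n)) coset_inc fst (Sset n)
   \<and> flag_transitive (FreeGrp n) (Ggrp n) (Sset n) (Gsub n)
   \<and> {phi1 n, phi_rho n, phi_tau n} \<subseteq> auto (FreeGrp n)
   \<and> (\<forall>\<phi> \<in> Kgrp n.
        \<phi> ` Ggrp n = Ggrp n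
      \<and> (\<exists>\<sigma>. bij_betw \<sigma> (Sset n) (Sset n) \<and> (\<forall>s \<in> Sset n. \<phi> ` Gsub n s = Gsub n (\<sigma> s))
           \<and> (\<exists>\<alpha>. is_correlation (coset_elems (FreeGrp n) (Ggrp n) (Sset n) (Gsub n)) coset_inc fst \<alpha>
                 \<and> (\<forall>s \<in> Sset n. \<forall>g \<in> Ggrp n.
                      \<alpha> (s, Gsub n s #>\<^bsub>FreeGrp n\<^esub> g) = (\<sigma> s, (\<phi> ` Gsub n s) #>\<^bsub>FreeGrp n\<^esub> \<phi> g)))))"
  unfolding FreeGrp_FG Sset_Sc
  using incidence_part geometry_part resid_part flag_trans_part
    phi1_auto phi_rho_auto[OF assms] phi_tau_auto[OF assms] good_corr Kgrp_good[OF assms]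
  by blast


end
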